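(* Let $(B,D,d,\theta)$ be a crossed module, $A$ an abelian group and $\zeta:\operatorname{Ker}d\to A$ a surjective abstract $\zeta$-kernel of this crossed module. Then there exists a $\zeta$-extension of co-type $B\xrightarrow{d}D$ if and only if the obstruction $\operatorname{Obs}(\zeta)$ vanishes in $H^3(\operatorname{Coker}d,A)$ (with $\operatorname{Coker}d$ acting trivially on $A$).
   Context: A crossed module $(B,D,d,\theta)$: groups $B,D$, homomorphisms $d:B\to D$, $\theta:D\to\operatorname{Aut}B$ with $\theta_{d(b)}(b')=bb'b^{-1}$ and $d(\theta_x(b))=x\,d(b)\,x^{-1}$. Then $\operatorname{Ker}d\subseteq Z(B)$, $d(B)\trianglelefteq D$ and $\operatorname{Ker}d$ is a $\operatorname{Coker}d=D/d(B)$-module via $s\cdot c=\theta_x(c)$, $x\in s$. An abstract $\zeta$-kernel: a homomorphism $\zeta:\operatorname{Ker}d\to A$ ($A$ abelian) with $\zeta(\theta_x(c))=\zeta(c)$ for all $x\in D,c\in\operatorname{Ker}d$. A $\zeta$-extension of co-type $B\xrightarrow{d}D$: an exact sequence of groups $0\to A\xrightarrow{j}E\xrightarrow{p}D\to1$ with $j(A)\subseteq Z(E)$, together with a homomorphism $\beta:B\to E$ such that $p\beta=d$, $\beta(\theta_x b)=e\,\beta(b)\,e^{-1}$ whenever $p(e)=x$, and $j(\zeta(c))=\beta(c)$ for all $c\in\operatorname{Ker}d$. Obstruction: choose representatives $x_s\in D$ of each $s\in\operatorname{Coker}d$ ($x_1=1$) and for each $x$ in class $s$ an element $b_x\in B$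 with $x_s=d(b_x)x$, $b_{x_s}=0$ (writing $B$ additively, not necessarily abelian). Put $\tilde H_{r,s}=-b_{x_rx_s}$ and define $k:(\operatorname{Coker}d)^3\to\operatorname{Ker}d$ by $\theta_{x_s}(\tilde H_{r,t})+\tilde H_{s,rt}+k(s,r,t)=\tilde H_{s,r}+\tilde H_{sr,t}$; $k$ is a 3-cocycle of $\operatorname{Coker}d$ with values in $\operatorname{Ker}d$. Then $\operatorname{Obs}(\zeta)=[\zeta\circ k]\in H^3(\operatorname{Coker}d,A)$. *)

theory Defs
  imports "HOL-Algebra.Algebra"
begin

definition crossed_module ::
  "'b monoid \<Rightarrow> 'd monoid \<Rightarrow> ('b \<Rightarrow> 'd) \<Rightarrow> ('d \<Rightarrow> 'b \<Rightarrow> 'b) \<Rightarrow> bool" where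
  "crossed_module B D d \<theta> \<longleftrightarrow>
     group B \<and> group D \<and> d \<in> hom B D \<and>
     (\<forall>x\<in>carrier D. \<theta> x \<in> iso B B) \<and>
     (\<forall>x\<in>carrier D. \<forall>y\<in>carrier D. \<forall>b\<in>carrier B.
         \<theta> (x \<otimes>\<^bsub>D\<^esub> y) b = \<theta> x (\<theta> y b)) \<and>
     (\<forall>b\<in>carrier B. \<theta> \<one>\<^bsub>D\<^esub> b = b) \<and>
     (\<forall>b\<in>carrier B. \<forall>b'\<in>carrier B.
         \<theta> (d b) b' = b \<otimes>\<^bsub>B\<^esub> b' \<otimes>\<^bsub>B\<^esub> inv\<^bsub>B\<^esub> b) \<and>
     (\<forall>x\<in>carrier D. \<forall>b\<in>carrier B.
         d (\<theta> x b) = x \<otimes>\<^bsub>D\<^esub> d b \<otimes>\<^bsub>D\<^esub> inv\<^bsub>D\<^esub> x)"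

definition Kerd :: "'b monoid \<Rightarrow> 'd monoid \<Rightarrow> ('b \<Rightarrow> 'd) \<Rightarrow> 'b monoid" where
  "Kerd B D d = B\<lparr>carrier := kernel B D d\<rparr>"

definition Coker :: "'b monoid \<Rightarrow> 'd monoid \<Rightarrow> ('b \<Rightarrow> 'd) \<Rightarrow> 'd set monoid" where
  "Coker B D d = D Mod (d ` carrier B)"

definition abstract_kernel ::
  "'b monoid \<Rightarrow> 'd monoid \<Rightarrow> ('b \<Rightarrow> 'd) \<Rightarrow> ('d \<Rightarrow> 'b \<Rightarrow> 'b) \<Rightarrow> 'a monoid \<Rightarrow> ('b \<Rightarrow> 'a) \<Rightarrow> bool" where
  "abstract_kernel B D d \<theta> A \<zeta> \<longleftrightarrow>
     comm_group A \<and> \<zeta> \<in> hom (Kerd B D d) A \<and>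
     (\<forall>x\<in>carrier D. \<forall>c\<in>kernel B D d. \<zeta> (\<theta> x c) = \<zeta> c)"

definition zeta_extension ::
  "'b monoid \<Rightarrow> 'd monoid \<Rightarrow> ('b \<Rightarrow> 'd) \<Rightarrow> ('d \<Rightarrow> 'b \<Rightarrow> 'b) \<Rightarrow> 'a monoid \<Rightarrow> ('b \<Rightarrow> 'a)
   \<Rightarrow> 'e monoid \<Rightarrow> ('a \<Rightarrow> 'e) \<Rightarrow> ('e \<Rightarrow> 'd) \<Rightarrow> ('b \<Rightarrow> 'e) \<Rightarrow> bool" where
  "zeta_extension B D d \<theta> A \<zeta> E j p \<beta> \<longleftrightarrow>
     group E \<and>
     \<comment> \<open>exactness of 0 -> A -> E -> D -> 1\<close>
     j \<in> hom A E \<and> inj_on j (carrier A) \<and>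
     p \<in> hom E D \<and> p ` carrier E = carrier D \<and>
     j ` carrier A = kernel E D p \<and>
     \<comment> \<open>j(A) is central in E\<close>
     (\<forall>a\<in>carrier A. \<forall>e\<in>carrier E. j a \<otimes>\<^bsub>E\<^esub> e = e \<otimes>\<^bsub>E\<^esub> j a) \<and>
     \<comment> \<open>the homomorphism beta\<close>
     \<beta> \<in> hom B E \<and>
     (\<forall>b\<in>carrier B. p (\<beta> b) = d b) \<and>
     (\<forall>e\<in>carrier E. \<forall>b\<in>carrier B.
         \<beta> (\<theta> (p e) b) = e \<otimes>\<^bsub>E\<^esub> \<beta> b \<otimes>\<^bsub>E\<^esub> inv\<^bsub>E\<^esub> e) \<and>
     (\<forall>c\<in>kernel B D d. j (\<zeta> c) = \<beta> c)"

text \<open>Admissible choice data: a representative x_s of each class s in Coker d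
  (with x_1 = 1), and for each x in D an element b_x in B with x_s = d(b_x) x, where s is
  the class of x, and b_{x_s} = 1.\<close>

definition obs_choice ::
  "'b monoid \<Rightarrow> 'd monoid \<Rightarrow> ('b \<Rightarrow> 'd) \<Rightarrow> ('d set \<Rightarrow> 'd) \<Rightarrow> ('d \<Rightarrow> 'b) \<Rightarrow> bool" where
  "obs_choice B D d xs bx \<longleftrightarrow>
     (\<forall>s\<in>carrier (Coker B D d). xs s \<in> s) \<and>
     xs (d ` carrier B) = \<one>\<^bsub>D\<^esub> \<and>
     (\<forall>x\<in>carrier D. bx x \<in> carrier B \<and>
         xs ((d ` carrier B) #>\<^bsub>D\<^esub> x) = d (bx x) \<otimes>\<^bsub>D\<^esub> x) \<and>
     (\<forall>s\<in>carrier (Coker B D d). bx (xs s) = \<one>\<^bsub>B\<^esub>)"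

definition Htil ::
  "'b monoid \<Rightarrow> 'd monoid \<Rightarrow> ('d set \<Rightarrow> 'd) \<Rightarrow> ('d \<Rightarrow> 'b) \<Rightarrow> 'd set \<Rightarrow> 'd set \<Rightarrow> 'b" where
  "Htil B D xs bx r s = inv\<^bsub>B\<^esub> (bx (xs r \<otimes>\<^bsub>D\<^esub> xs s))"

text \<open>The 3-cocycle k, solving
  theta_{x_s}(H_{r,t}) + H_{s,rt} + k(s,r,t) = H_{s,r} + H_{sr,t} (in B, written additively),
  i.e. k(s,r,t) = - H_{s,rt} - theta_{x_s}(H_{r,t}) + H_{s,r} + H_{sr,t}.\<close>

definition obs_k ::
  "'b monoid \<Rightarrow> 'd monoid \<Rightarrow> ('b \<Rightarrow> 'd) \<Rightarrow> ('d \<Rightarrow> 'b \<Rightarrow> 'b) \<Rightarrow> ('d set \<Rightarrow> 'd) \<Rightarrow> ('d \<Rightarrow> 'b)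
   \<Rightarrow> 'd set \<Rightarrow> 'd set \<Rightarrow> 'd set \<Rightarrow> 'b" where
  "obs_k B D d \<theta> xs bx s r t =
     (let Q = Coker B D d; H = Htil B D xs bx in
       inv\<^bsub>B\<^esub> (H s (r \<otimes>\<^bsub>Q\<^esub> t)) \<otimes>\<^bsub>B\<^esub> inv\<^bsub>B\<^esub> (\<theta> (xs s) (H r t))
         \<otimes>\<^bsub>B\<^esub> H s r \<otimes>\<^bsub>B\<^esub> H (s \<otimes>\<^bsub>Q\<^esub> r) t)"

text \<open>A 3-cochain f : Q^3 -> A (trivial action) represents 0 in H^3(Q,A) iff it is a
  coboundary: f(s,r,t) = g(r,t) - g(sr,t) + g(s,rt) - g(s,r) for some 2-cochain g.\<close>

definition coboundary3 :: "'q monoid \<Rightarrow> 'a monoid \<Rightarrow> ('q \<Rightarrow> 'q \<Rightarrow> 'q \<Rightarrow> 'a) \<Rightarrow> bool" where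
  "coboundary3 Q A f \<longleftrightarrow>
     (\<exists>g. (\<forall>r\<in>carrier Q. \<forall>s\<in>carrier Q. g r s \<in> carrier A) \<and>
          (\<forall>s\<in>carrier Q. \<forall>r\<in>carrier Q. \<forall>t\<in>carrier Q.
             f s r t = g r t \<otimes>\<^bsub>A\<^esub> inv\<^bsub>A\<^esub> (g (s \<otimes>\<^bsub>Q\<^esub> r) t)
                        \<otimes>\<^bsub>A\<^esub> g s (r \<otimes>\<^bsub>Q\<^esub> t) \<otimes>\<^bsub>A\<^esub> inv\<^bsub>A\<^esub> (g s r)))"

definition obs_vanishes ::
  "'b monoid \<Rightarrow> 'd monoid \<Rightarrow> ('b \<Rightarrow> 'd) \<Rightarrow> ('d \<Rightarrow> 'b \<Rightarrow> 'b) \<Rightarrow> 'a monoid \<Rightarrow> ('b \<Rightarrow> 'a)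
   \<Rightarrow> ('d set \<Rightarrow> 'd) \<Rightarrow> ('d \<Rightarrow> 'b) \<Rightarrow> bool" where
  "obs_vanishes B D d \<theta> A \<zeta> xs bx \<longleftrightarrow>
     coboundary3 (Coker B D d) A (\<lambda>s r t. \<zeta> (obs_k B D d \<theta> xs bx s r t))"

end

theory Submission
  imports Defs
begin
lemma (in group) gc1[simp]: "x \<in> carrier G \<Longrightarrow> y \<in> carrier G \<Longrightarrow> inv x \<otimes> (x \<otimes> y) = y"
  by (simp add: m_assoc[symmetric])
lemma (in group) gc2[simp]: "x \<in> carrier G \<Longrightarrow> y \<in> carrier G \<Longrightarrow> x \<otimes> (inv x \<otimes> y) = y"
  by (simp add: m_assoc[symmetric])

locale cmset =
  fixes B :: "'b monoid" and D :: "'d monoid" and d :: "'b \<Rightarrow> 'd"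
    and \<theta> :: "'d \<Rightarrow> 'b \<Rightarrow> 'b" and A :: "'a monoid" and \<zeta> :: "'b \<Rightarrow> 'a"
    and xs :: "'d set \<Rightarrow> 'd" and bx :: "'d \<Rightarrow> 'b"
  assumes cm: "crossed_module B D d \<theta>"
    and ak: "abstract_kernel B D d \<theta> A \<zeta>"
    and oc: "obs_choice B D d xs bx"
begin

lemma grpB: "group B" and grpD: "group D" and dhom: "d \<in> hom B D"
  and thiso: "\<And>x. x \<in> carrier D \<Longrightarrow> \<theta> x \<in> iso B B"
  and thmult: "\<And>x y b. x\<in>carrier D \<Longrightarrow> y\<in>carrier D \<Longrightarrow> b\<in>carrier B \<Longrightarrow> \<theta> (x \<otimes>\<^bsub>D\<^esub> y) b = \<theta> x (\<theta> y b)"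
  and thone: "\<And>b. b\<in>carrier B \<Longrightarrow> \<theta> \<one>\<^bsub>D\<^esub> b = b"
  and thd: "\<And>b b'. b\<in>carrier B \<Longrightarrow> b'\<in>carrier B \<Longrightarrow> \<theta> (d b) b' = b \<otimes>\<^bsub>B\<^esub> b' \<otimes>\<^bsub>B\<^esub> inv\<^bsub>B\<^esub> b"
  and dth: "\<And>x b. x\<in>carrier D \<Longrightarrow> b\<in>carrier B \<Longrightarrow> d (\<theta> x b) = x \<otimes>\<^bsub>D\<^esub> d b \<otimes>\<^bsub>D\<^esub> inv\<^bsub>D\<^esub> x"
  using cm unfolding crossed_module_def by auto

lemma cgA: "comm_group A" and zhom: "\<zeta> \<in> hom (Kerd B D d) A"
  and zth: "\<And>x c. x\<in>carrier D \<Longrightarrow> c\<in>kernel B D d \<Longrightarrow> \<zeta> (\<theta> x c) = \<zeta> c"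
  using ak unfolding abstract_kernel_def by auto

sublocale B: group B by (rule grpB)
sublocale D: group D by (rule grpD)
sublocale A: comm_group A by (rule cgA)
sublocale d: group_hom B D d by (simp add: group_hom_def group_hom_axioms_def grpB grpD dhom)

lemma th_hom: "x \<in> carrier D \<Longrightarrow> group_hom B B (\<theta> x)"
  using thiso[of x] by (simp add: group_hom_def group_hom_axioms_def grpB iso_imp_homomorphism)

lemma th_closed[simp]: "x \<in> carrier D \<Longrightarrow> b \<in> carrier B \<Longrightarrow> \<theta> x b \<in> carrier B"
  by (rule group_hom.hom_closed[OF th_hom])
lemma th_mult[simp]: "x \<in> carrier D \<Longrightarrow> b \<in> carrier B \<Longrightarrow> b' \<in> carrier B \<Longrightarrow> \<theta> x (b \<otimes>\<^bsub>B\<^esub> b') = \<theta> x b \<otimes>\<^bsub>B\<^esub> \<theta> x b'"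
  by (rule group_hom.hom_mult[OF th_hom])
lemma th_inv[simp]: "x \<in> carrier D \<Longrightarrow> b \<in> carrier B \<Longrightarrow> \<theta> x (inv\<^bsub>B\<^esub> b) = inv\<^bsub>B\<^esub> (\<theta> x b)"
  by (rule group_hom.hom_inv[OF th_hom])
lemma th_one[simp]: "x \<in> carrier D \<Longrightarrow> \<theta> x \<one>\<^bsub>B\<^esub> = \<one>\<^bsub>B\<^esub>"
  by (rule group_hom.hom_one[OF th_hom])

abbreviation "K \<equiv> kernel B D d"

lemma K_iff: "c \<in> K \<longleftrightarrow> c \<in> carrier B \<and> d c = \<one>\<^bsub>D\<^esub>" by (simp add: kernel_def)

lemma K_central: "c \<in> K \<Longrightarrow> b \<in> carrier B \<Longrightarrow> c \<otimes>\<^bsub>B\<^esub> b = b \<otimes>\<^bsub>B\<^esub> c"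
proof -
  assume c: "c \<in> K" and b: "b \<in> carrier B"
  hence cB: "c \<in> carrier B" and dc: "d c = \<one>\<^bsub>D\<^esub>" by (auto simp: K_iff)
  have e: "b = c \<otimes>\<^bsub>B\<^esub> b \<otimes>\<^bsub>B\<^esub> inv\<^bsub>B\<^esub> c" using thd[OF cB b] thone[OF b] dc by metis
  have "b = c \<otimes>\<^bsub>B\<^esub> b \<otimes>\<^bsub>B\<^esub> inv\<^bsub>B\<^esub> c \<longleftrightarrow> c \<otimes>\<^bsub>B\<^esub> b = b \<otimes>\<^bsub>B\<^esub> c" using B.inv_solve_right[of b "c \<otimes>\<^bsub>B\<^esub> b" c] cB b by blast
  from this e show ?thesis by (rule iffD1)
qed

lemma K_mult: "c \<in> K \<Longrightarrow> c' \<in> K \<Longrightarrow> c \<otimes>\<^bsub>B\<^esub> c' \<in> K" by (simp add: K_iff)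
lemma K_inv: "c \<in> K \<Longrightarrow> inv\<^bsub>B\<^esub> c \<in> K" by (simp add: K_iff)
lemma K_one: "\<one>\<^bsub>B\<^esub> \<in> K" by (simp add: K_iff)
lemma K_th: "x \<in> carrier D \<Longrightarrow> c \<in> K \<Longrightarrow> \<theta> x c \<in> K" by (simp add: K_iff dth)

lemma z_closed: "c \<in> K \<Longrightarrow> \<zeta> c \<in> carrier A"
  using zhom by (auto simp: hom_def Kerd_def)
lemma z_mult: "c \<in> K \<Longrightarrow> c' \<in> K \<Longrightarrow> \<zeta> (c \<otimes>\<^bsub>B\<^esub> c') = \<zeta> c \<otimes>\<^bsub>A\<^esub> \<zeta> c'"
  using zhom by (auto simp: hom_def Kerd_def)
lemma KG: "group (Kerd B D d)"
  unfolding Kerd_def using d.subgroup_kernel B.subgroup_imp_group by blast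
lemma zgh: "group_hom (Kerd B D d) A \<zeta>"
  by (simp add: group_hom_def group_hom_axioms_def KG zhom A.is_group)
lemma z_inv: "c \<in> K \<Longrightarrow> \<zeta> (inv\<^bsub>B\<^esub> c) = inv\<^bsub>A\<^esub> \<zeta> c"
proof -
  assume c: "c \<in> K"
  have "inv\<^bsub>Kerd B D d\<^esub> c = inv\<^bsub>B\<^esub> c"
    unfolding Kerd_def using c d.subgroup_kernel B.m_inv_consistent by blast
  thus ?thesis using group_hom.hom_inv[OF zgh, of c] c by (simp add: Kerd_def)
qed
lemma z_one: "\<zeta> \<one>\<^bsub>B\<^esub> = \<one>\<^bsub>A\<^esub>"
  using group_hom.hom_one[OF zgh] by (simp add: Kerd_def)


abbreviation "N \<equiv> d ` carrier B"
abbreviation "Q \<equiv> Coker B D d"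
definition "cl x = N #>\<^bsub>D\<^esub> x"
definition "cc x = inv\<^bsub>B\<^esub> (bx x)"

lemma N_sub: "subgroup N D" by (rule d.img_is_subgroup)
lemma N_subset: "N \<subseteq> carrier D" using N_sub subgroup.subset by blast

lemma N_normal: "N \<lhd> D"
proof (rule D.normal_invI[OF N_sub])
  fix x h assume x: "x \<in> carrier D" and h: "h \<in> N"
  then obtain b where b: "b \<in> carrier B" "h = d b" by blast
  have "x \<otimes>\<^bsub>D\<^esub> h \<otimes>\<^bsub>D\<^esub> inv\<^bsub>D\<^esub> x = d (\<theta> x b)" using dth[OF x b(1)] b by simp
  thus "x \<otimes>\<^bsub>D\<^esub> h \<otimes>\<^bsub>D\<^esub> inv\<^bsub>D\<^esub> x \<in> N" using x b(1) by simp
qed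

sublocale Nn: normal N D by (rule N_normal)

lemma Q_group: "group Q" unfolding Coker_def by (rule Nn.factorgroup_is_group)
sublocale Q: group Q by (rule Q_group)

lemma Q_mult: "x \<otimes>\<^bsub>Q\<^esub> y = x <#>\<^bsub>D\<^esub> y" by (simp add: Coker_def)
lemma Q_one: "\<one>\<^bsub>Q\<^esub> = N" by (simp add: Coker_def)
lemma Q_carrier: "carrier Q = rcosets\<^bsub>D\<^esub> N" by (simp add: Coker_def FactGroup_def)

lemma cl_Q: "x \<in> carrier D \<Longrightarrow> cl x \<in> carrier Q"
  unfolding Q_carrier cl_def using D.rcosetsI N_subset by blast
lemma cl_mult: "x \<in> carrier D \<Longrightarrow> y \<in> carrier D \<Longrightarrow> cl (x \<otimes>\<^bsub>D\<^esub> y) = cl x \<otimes>\<^bsub>Q\<^esub> cl y"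
  unfolding Q_mult cl_def by (simp add: Nn.rcos_sum)
lemma cl_one: "cl \<one>\<^bsub>D\<^esub> = \<one>\<^bsub>Q\<^esub>"
  unfolding Q_one cl_def using N_subset by simp
lemma Q_cases: "s \<in> carrier Q \<Longrightarrow> \<exists>x\<in>carrier D. s = cl x"
  unfolding Q_carrier cl_def RCOSETS_def by blast

lemma oc1: "s \<in> carrier Q \<Longrightarrow> xs s \<in> s" using oc unfolding obs_choice_def by blast
lemma oc2: "xs N = \<one>\<^bsub>D\<^esub>" using oc unfolding obs_choice_def by blast
lemma oc3: "x \<in> carrier D \<Longrightarrow> bx x \<in> carrier B" using oc unfolding obs_choice_def by blast
lemma oc4: "x \<in> carrier D \<Longrightarrow> xs (cl x) = d (bx x) \<otimes>\<^bsub>D\<^esub> x" using oc unfolding obs_choice_def cl_def by blast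
lemma oc5: "s \<in> carrier Q \<Longrightarrow> bx (xs s) = \<one>\<^bsub>B\<^esub>" using oc unfolding obs_choice_def by blast

lemma X_D[simp]: "s \<in> carrier Q \<Longrightarrow> xs s \<in> carrier D"
proof -
  assume s: "s \<in> carrier Q"
  then obtain x where x: "x \<in> carrier D" "s = cl x" using Q_cases by blast
  have "s \<subseteq> carrier D" using x N_subset D.r_coset_subset_G by (simp add: cl_def)
  thus ?thesis using oc1[OF s] by blast
qed

lemma cl_X[simp]: "s \<in> carrier Q \<Longrightarrow> cl (xs s) = s"
proof -
  assume s: "s \<in> carrier Q"
  then obtain x where x: "x \<in> carrier D" "s = cl x" using Q_cases by blast
  show ?thesis using D.repr_independence[of "xs s" N x] oc1[OF s] x N_sub by (simp add: cl_def)
qed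

lemma cc_B[simp]: "x \<in> carrier D \<Longrightarrow> cc x \<in> carrier B" by (simp add: cc_def oc3)
lemma cl_D[simp]: "x \<in> carrier D \<Longrightarrow> cl x \<in> carrier Q" by (rule cl_Q)

lemma cc_eq: "x \<in> carrier D \<Longrightarrow> d (cc x) \<otimes>\<^bsub>D\<^esub> xs (cl x) = x"
proof -
  assume x: "x \<in> carrier D"
  have "d (cc x) \<otimes>\<^bsub>D\<^esub> xs (cl x) = inv\<^bsub>D\<^esub> (d (bx x)) \<otimes>\<^bsub>D\<^esub> (d (bx x) \<otimes>\<^bsub>D\<^esub> x)"
    using x oc3 oc4 by (simp add: cc_def)
  also have "\<dots> = x" using x oc3 by (simp add: D.m_assoc[symmetric])
  finally show ?thesis .
qed

lemma cc_X[simp]: "s \<in> carrier Q \<Longrightarrow> cc (xs s) = \<one>\<^bsub>B\<^esub>" by (simp add: cc_def oc5)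
lemma cl_one': "cl \<one>\<^bsub>D\<^esub> = N" using cl_one Q_one by simp
lemma N_Q: "N \<in> carrier Q" using Q.one_closed Q_one by simp
lemma cc_one[simp]: "cc \<one>\<^bsub>D\<^esub> = \<one>\<^bsub>B\<^esub>" using cc_X[OF N_Q] oc2 by simp

lemma th_cc: "x \<in> carrier D \<Longrightarrow> b \<in> carrier B \<Longrightarrow>
   \<theta> x b = cc x \<otimes>\<^bsub>B\<^esub> \<theta> (xs (cl x)) b \<otimes>\<^bsub>B\<^esub> inv\<^bsub>B\<^esub> (cc x)"
proof -
  assume x: "x \<in> carrier D" and b: "b \<in> carrier B"
  have "\<theta> x b = \<theta> (d (cc x) \<otimes>\<^bsub>D\<^esub> xs (cl x)) b" using cc_eq[OF x] by simp
  also have "\<dots> = \<theta> (d (cc x)) (\<theta> (xs (cl x)) b)" using x b by (simp add: thmult)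
  also have "\<dots> = cc x \<otimes>\<^bsub>B\<^esub> \<theta> (xs (cl x)) b \<otimes>\<^bsub>B\<^esub> inv\<^bsub>B\<^esub> (cc x)" using x b by (simp add: thd)
  finally show ?thesis .
qed

lemma H_cc: "Htil B D xs bx r s = cc (xs r \<otimes>\<^bsub>D\<^esub> xs s)" by (simp add: Htil_def cc_def)

lemma cl_XX: "r \<in> carrier Q \<Longrightarrow> s \<in> carrier Q \<Longrightarrow> cl (xs r \<otimes>\<^bsub>D\<^esub> xs s) = r \<otimes>\<^bsub>Q\<^esub> s"
  by (simp add: cl_mult)
abbreviation "HH \<equiv> Htil B D xs bx"

lemma HH_B[simp]: "r \<in> carrier Q \<Longrightarrow> s \<in> carrier Q \<Longrightarrow> HH r s \<in> carrier B"
  by (simp add: H_cc)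

lemma HH_d: "r \<in> carrier Q \<Longrightarrow> s \<in> carrier Q \<Longrightarrow> d (HH r s) = xs r \<otimes>\<^bsub>D\<^esub> xs s \<otimes>\<^bsub>D\<^esub> inv\<^bsub>D\<^esub> (xs (r \<otimes>\<^bsub>Q\<^esub> s))"
proof -
  assume r: "r \<in> carrier Q" and s: "s \<in> carrier Q"
  have e: "d (HH r s) \<otimes>\<^bsub>D\<^esub> xs (r \<otimes>\<^bsub>Q\<^esub> s) = xs r \<otimes>\<^bsub>D\<^esub> xs s"
    using cc_eq[of "xs r \<otimes>\<^bsub>D\<^esub> xs s"] r s by (simp add: H_cc cl_XX)
  have "d (HH r s) = d (HH r s) \<otimes>\<^bsub>D\<^esub> xs (r \<otimes>\<^bsub>Q\<^esub> s) \<otimes>\<^bsub>D\<^esub> inv\<^bsub>D\<^esub> (xs (r \<otimes>\<^bsub>Q\<^esub> s))"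
    using r s by (simp add: D.m_assoc)
  also have "\<dots> = xs r \<otimes>\<^bsub>D\<^esub> xs s \<otimes>\<^bsub>D\<^esub> inv\<^bsub>D\<^esub> (xs (r \<otimes>\<^bsub>Q\<^esub> s))" using e by simp
  finally show ?thesis .
qed

lemma k_K: "s \<in> carrier Q \<Longrightarrow> r \<in> carrier Q \<Longrightarrow> t \<in> carrier Q \<Longrightarrow> obs_k B D d \<theta> xs bx s r t \<in> K"
proof -
  assume s: "s \<in> carrier Q" and r: "r \<in> carrier Q" and t: "t \<in> carrier Q"
  have a: "s \<otimes>\<^bsub>Q\<^esub> r \<otimes>\<^bsub>Q\<^esub> t = s \<otimes>\<^bsub>Q\<^esub> (r \<otimes>\<^bsub>Q\<^esub> t)" using s r t by (simp add: Q.m_assoc)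
  show ?thesis
    unfolding obs_k_def Let_def K_iff
    using s r t by (simp add: HH_d dth D.inv_mult_group D.m_assoc a)
qed

end

locale cmext = cmset B D d \<theta> A \<zeta> xs bx
  for B :: "'b monoid" and D :: "'d monoid" and d :: "'b \<Rightarrow> 'd"
    and \<theta> :: "'d \<Rightarrow> 'b \<Rightarrow> 'b" and A :: "'a monoid" and \<zeta> :: "'b \<Rightarrow> 'a"
    and xs :: "'d set \<Rightarrow> 'd" and bx :: "'d \<Rightarrow> 'b" +
  fixes E :: "'e monoid" and j :: "'a \<Rightarrow> 'e" and p :: "'e \<Rightarrow> 'd" and \<beta> :: "'b \<Rightarrow> 'e"
  assumes ze: "zeta_extension B D d \<theta> A \<zeta> E j p \<beta>"
begin

lemma grpE: "group E" and jhom: "j \<in> hom A E" and jinj: "inj_on j (carrier A)"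
  and phom: "p \<in> hom E D" and psurj: "p ` carrier E = carrier D"
  and jker: "j ` carrier A = kernel E D p"
  and jcent: "!!a e. a \<in> carrier A \<Longrightarrow> e \<in> carrier E \<Longrightarrow> j a \<otimes>\<^bsub>E\<^esub> e = e \<otimes>\<^bsub>E\<^esub> j a"
  and bhom: "\<beta> \<in> hom B E"
  and pb: "!!b. b \<in> carrier B \<Longrightarrow> p (\<beta> b) = d b"
  and bth: "!!e b. e \<in> carrier E \<Longrightarrow> b \<in> carrier B \<Longrightarrow> \<beta> (\<theta> (p e) b) = e \<otimes>\<^bsub>E\<^esub> \<beta> b \<otimes>\<^bsub>E\<^esub> inv\<^bsub>E\<^esub> e"
  and jz: "!!c. c \<in> K \<Longrightarrow> j (\<zeta> c) = \<beta> c"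
  using ze unfolding zeta_extension_def by auto

sublocale E: group E by (rule grpE)
sublocale j: group_hom A E j by (simp add: group_hom_def group_hom_axioms_def A.is_group grpE jhom)
sublocale p: group_hom E D p by (simp add: group_hom_def group_hom_axioms_def grpD grpE phom)
sublocale be: group_hom B E \<beta> by (simp add: group_hom_def group_hom_axioms_def grpB grpE bhom)

definition "u s = (SOME e. e \<in> carrier E \<and> p e = xs s)"

lemma u: "s \<in> carrier Q \<Longrightarrow> u s \<in> carrier E \<and> p (u s) = xs s"
proof -
  assume s: "s \<in> carrier Q"
  have "\<exists>e. e \<in> carrier E \<and> p e = xs s" using psurj X_D[OF s] by (metis imageE)
  thus ?thesis unfolding u_def by (rule someI_ex)
qed

lemma uE[simp]: "s \<in> carrier Q \<Longrightarrow> u s \<in> carrier E" using u by blast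
lemma pu[simp]: "s \<in> carrier Q \<Longrightarrow> p (u s) = xs s" using u by blast

definition "g r s = (SOME a. a \<in> carrier A \<and> j a = inv\<^bsub>E\<^esub> (\<beta> (HH r s)) \<otimes>\<^bsub>E\<^esub> u r \<otimes>\<^bsub>E\<^esub> u s \<otimes>\<^bsub>E\<^esub> inv\<^bsub>E\<^esub> (u (r \<otimes>\<^bsub>Q\<^esub> s)))"

lemma g_prop: "r \<in> carrier Q \<Longrightarrow> s \<in> carrier Q \<Longrightarrow>
   g r s \<in> carrier A \<and> j (g r s) = inv\<^bsub>E\<^esub> (\<beta> (HH r s)) \<otimes>\<^bsub>E\<^esub> u r \<otimes>\<^bsub>E\<^esub> u s \<otimes>\<^bsub>E\<^esub> inv\<^bsub>E\<^esub> (u (r \<otimes>\<^bsub>Q\<^esub> s))"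
proof -
  assume r: "r \<in> carrier Q" and s: "s \<in> carrier Q"
  define w where "w = inv\<^bsub>E\<^esub> (\<beta> (HH r s)) \<otimes>\<^bsub>E\<^esub> u r \<otimes>\<^bsub>E\<^esub> u s \<otimes>\<^bsub>E\<^esub> inv\<^bsub>E\<^esub> (u (r \<otimes>\<^bsub>Q\<^esub> s))"
  have wE: "w \<in> carrier E" using r s by (simp add: w_def)
  have "p w = inv\<^bsub>D\<^esub> (d (HH r s)) \<otimes>\<^bsub>D\<^esub> xs r \<otimes>\<^bsub>D\<^esub> xs s \<otimes>\<^bsub>D\<^esub> inv\<^bsub>D\<^esub> (xs (r \<otimes>\<^bsub>Q\<^esub> s))"
    using r s by (simp add: w_def pb)
  also have "\<dots> = \<one>\<^bsub>D\<^esub>" using r s by (simp add: HH_d D.inv_mult_group D.m_assoc)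
  finally have "w \<in> kernel E D p" using wE by (simp add: kernel_def)
  then obtain a where "a \<in> carrier A" "j a = w" using jker by (metis imageE)
  hence "\<exists>a. a \<in> carrier A \<and> j a = w" by blast
  thus ?thesis unfolding g_def w_def[symmetric] by (rule someI_ex)
qed

lemma gA[simp]: "r \<in> carrier Q \<Longrightarrow> s \<in> carrier Q \<Longrightarrow> g r s \<in> carrier A" using g_prop by blast

lemma R: "r \<in> carrier Q \<Longrightarrow> s \<in> carrier Q \<Longrightarrow> u r \<otimes>\<^bsub>E\<^esub> u s = \<beta> (HH r s) \<otimes>\<^bsub>E\<^esub> j (g r s) \<otimes>\<^bsub>E\<^esub> u (r \<otimes>\<^bsub>Q\<^esub> s)"
proof -
  assume r: "r \<in> carrier Q" and s: "s \<in> carrier Q"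
  have "\<beta> (HH r s) \<otimes>\<^bsub>E\<^esub> j (g r s) \<otimes>\<^bsub>E\<^esub> u (r \<otimes>\<^bsub>Q\<^esub> s)
     = \<beta> (HH r s) \<otimes>\<^bsub>E\<^esub> (inv\<^bsub>E\<^esub> (\<beta> (HH r s)) \<otimes>\<^bsub>E\<^esub> u r \<otimes>\<^bsub>E\<^esub> u s \<otimes>\<^bsub>E\<^esub> inv\<^bsub>E\<^esub> (u (r \<otimes>\<^bsub>Q\<^esub> s))) \<otimes>\<^bsub>E\<^esub> u (r \<otimes>\<^bsub>Q\<^esub> s)"
    using g_prop[OF r s] by simp
  also have "\<dots> = u r \<otimes>\<^bsub>E\<^esub> u s" using r s by (simp add: E.m_assoc)
  finally show ?thesis by simp
qed

lemma jc2: "a \<in> carrier A \<Longrightarrow> x \<in> carrier E \<Longrightarrow> y \<in> carrier E \<Longrightarrow> j a \<otimes>\<^bsub>E\<^esub> (x \<otimes>\<^bsub>E\<^esub> y) = x \<otimes>\<^bsub>E\<^esub> (j a \<otimes>\<^bsub>E\<^esub> y)"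
  by (metis E.m_assoc j.hom_closed jcent)

lemma dir1: "obs_vanishes B D d \<theta> A \<zeta> xs bx"
  unfolding obs_vanishes_def coboundary3_def
proof (intro exI[of _ g] conjI ballI)
  fix r s assume "r \<in> carrier Q" "s \<in> carrier Q" thus "g r s \<in> carrier A" by simp
next
  fix s r t assume s: "s \<in> carrier Q" and r: "r \<in> carrier Q" and t: "t \<in> carrier Q"
  define a1 where "a1 = g s r"
  define a2 where "a2 = g (s \<otimes>\<^bsub>Q\<^esub> r) t"
  define a3 where "a3 = g r t"
  define a4 where "a4 = g s (r \<otimes>\<^bsub>Q\<^esub> t)"
  define h1 where "h1 = \<beta> (HH s r)"
  define h2 where "h2 = \<beta> (HH (s \<otimes>\<^bsub>Q\<^esub> r) t)"
  define h3 where "h3 = \<beta> (\<theta> (xs s) (HH r t))"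
  define h4 where "h4 = \<beta> (HH s (r \<otimes>\<^bsub>Q\<^esub> t))"
  define w where "w = u (s \<otimes>\<^bsub>Q\<^esub> r \<otimes>\<^bsub>Q\<^esub> t)"
  have A1: "a1 \<in> carrier A" "a2 \<in> carrier A" "a3 \<in> carrier A" "a4 \<in> carrier A"
    using s r t by (simp_all add: a1_def a2_def a3_def a4_def)
  have E1: "h1 \<in> carrier E" "h2 \<in> carrier E" "h3 \<in> carrier E" "h4 \<in> carrier E" "w \<in> carrier E"
    using s r t by (simp_all add: h1_def h2_def h3_def h4_def w_def)
  have assoc: "s \<otimes>\<^bsub>Q\<^esub> r \<otimes>\<^bsub>Q\<^esub> t = s \<otimes>\<^bsub>Q\<^esub> (r \<otimes>\<^bsub>Q\<^esub> t)" using s r t by (simp add: Q.m_assoc)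
  have L: "(u s \<otimes>\<^bsub>E\<^esub> u r) \<otimes>\<^bsub>E\<^esub> u t = h1 \<otimes>\<^bsub>E\<^esub> h2 \<otimes>\<^bsub>E\<^esub> j (a1 \<otimes>\<^bsub>A\<^esub> a2) \<otimes>\<^bsub>E\<^esub> w"
  proof -
    have "(u s \<otimes>\<^bsub>E\<^esub> u r) \<otimes>\<^bsub>E\<^esub> u t = h1 \<otimes>\<^bsub>E\<^esub> j a1 \<otimes>\<^bsub>E\<^esub> (u (s \<otimes>\<^bsub>Q\<^esub> r) \<otimes>\<^bsub>E\<^esub> u t)"
      using R[OF s r] s r t by (simp add: E.m_assoc h1_def a1_def)
    also have "\<dots> = h1 \<otimes>\<^bsub>E\<^esub> j a1 \<otimes>\<^bsub>E\<^esub> (h2 \<otimes>\<^bsub>E\<^esub> j a2 \<otimes>\<^bsub>E\<^esub> w)"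
      using R[of "s \<otimes>\<^bsub>Q\<^esub> r" t] s r t by (simp add: h2_def a2_def w_def)
    also have "\<dots> = h1 \<otimes>\<^bsub>E\<^esub> (j a1 \<otimes>\<^bsub>E\<^esub> (h2 \<otimes>\<^bsub>E\<^esub> (j a2 \<otimes>\<^bsub>E\<^esub> w)))"
      using A1 E1 by (simp add: E.m_assoc)
    also have "\<dots> = h1 \<otimes>\<^bsub>E\<^esub> (h2 \<otimes>\<^bsub>E\<^esub> (j a1 \<otimes>\<^bsub>E\<^esub> (j a2 \<otimes>\<^bsub>E\<^esub> w)))"
      by (simp only: jc2[OF A1(1) E1(2) E.m_closed[OF j.hom_closed[OF A1(2)] E1(5)]])
    also have "\<dots> = h1 \<otimes>\<^bsub>E\<^esub> h2 \<otimes>\<^bsub>E\<^esub> j (a1 \<otimes>\<^bsub>A\<^esub> a2) \<otimes>\<^bsub>E\<^esub> w"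
      using A1 E1 by (simp add: E.m_assoc)
    finally show ?thesis .
  qed
  have conj: "u s \<otimes>\<^bsub>E\<^esub> \<beta> (HH r t) = h3 \<otimes>\<^bsub>E\<^esub> u s"
    using bth[of "u s" "HH r t"] s r t by (simp add: h3_def E.m_assoc)
  have Rr: "u s \<otimes>\<^bsub>E\<^esub> (u r \<otimes>\<^bsub>E\<^esub> u t) = h3 \<otimes>\<^bsub>E\<^esub> h4 \<otimes>\<^bsub>E\<^esub> j (a3 \<otimes>\<^bsub>A\<^esub> a4) \<otimes>\<^bsub>E\<^esub> w"
  proof -
    have "u s \<otimes>\<^bsub>E\<^esub> (u r \<otimes>\<^bsub>E\<^esub> u t) = u s \<otimes>\<^bsub>E\<^esub> (\<beta> (HH r t) \<otimes>\<^bsub>E\<^esub> j a3 \<otimes>\<^bsub>E\<^esub> u (r \<otimes>\<^bsub>Q\<^esub> t))"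
      using R[OF r t] by (simp add: a3_def)
    also have "\<dots> = (u s \<otimes>\<^bsub>E\<^esub> \<beta> (HH r t)) \<otimes>\<^bsub>E\<^esub> (j a3 \<otimes>\<^bsub>E\<^esub> u (r \<otimes>\<^bsub>Q\<^esub> t))"
      using A1 s r t by (simp add: E.m_assoc)
    also have "\<dots> = h3 \<otimes>\<^bsub>E\<^esub> (u s \<otimes>\<^bsub>E\<^esub> (j a3 \<otimes>\<^bsub>E\<^esub> u (r \<otimes>\<^bsub>Q\<^esub> t)))"
      using A1 E1 s r t by (simp add: conj E.m_assoc)
    also have "\<dots> = h3 \<otimes>\<^bsub>E\<^esub> (j a3 \<otimes>\<^bsub>E\<^esub> (u s \<otimes>\<^bsub>E\<^esub> u (r \<otimes>\<^bsub>Q\<^esub> t)))"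
      using s r t by (simp only: jc2[OF A1(3) uE[OF s] uE[OF Q.m_closed[OF r t]]])
    also have "\<dots> = h3 \<otimes>\<^bsub>E\<^esub> (j a3 \<otimes>\<^bsub>E\<^esub> (h4 \<otimes>\<^bsub>E\<^esub> j a4 \<otimes>\<^bsub>E\<^esub> w))"
      using R[of s "r \<otimes>\<^bsub>Q\<^esub> t"] s r t by (simp add: h4_def a4_def w_def assoc)
    also have "\<dots> = h3 \<otimes>\<^bsub>E\<^esub> (j a3 \<otimes>\<^bsub>E\<^esub> (h4 \<otimes>\<^bsub>E\<^esub> (j a4 \<otimes>\<^bsub>E\<^esub> w)))"
      using A1 E1 by (simp add: E.m_assoc)
    also have "\<dots> = h3 \<otimes>\<^bsub>E\<^esub> (h4 \<otimes>\<^bsub>E\<^esub> (j a3 \<otimes>\<^bsub>E\<^esub> (j a4 \<otimes>\<^bsub>E\<^esub> w)))"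
      by (simp only: jc2[OF A1(3) E1(4) E.m_closed[OF j.hom_closed[OF A1(4)] E1(5)]])
    also have "\<dots> = h3 \<otimes>\<^bsub>E\<^esub> h4 \<otimes>\<^bsub>E\<^esub> j (a3 \<otimes>\<^bsub>A\<^esub> a4) \<otimes>\<^bsub>E\<^esub> w"
      using A1 E1 by (simp add: E.m_assoc)
    finally show ?thesis .
  qed
  have "h1 \<otimes>\<^bsub>E\<^esub> h2 \<otimes>\<^bsub>E\<^esub> j (a1 \<otimes>\<^bsub>A\<^esub> a2) \<otimes>\<^bsub>E\<^esub> w = h3 \<otimes>\<^bsub>E\<^esub> h4 \<otimes>\<^bsub>E\<^esub> j (a3 \<otimes>\<^bsub>A\<^esub> a4) \<otimes>\<^bsub>E\<^esub> w"
    using L Rr s r t by (metis E.m_assoc uE)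
  hence eq: "h1 \<otimes>\<^bsub>E\<^esub> h2 \<otimes>\<^bsub>E\<^esub> j (a1 \<otimes>\<^bsub>A\<^esub> a2) = h3 \<otimes>\<^bsub>E\<^esub> h4 \<otimes>\<^bsub>E\<^esub> j (a3 \<otimes>\<^bsub>A\<^esub> a4)"
    using A1 E1 E.right_cancel[of w] by (meson E.m_closed j.hom_closed A.m_closed)
  define k where "k = obs_k B D d \<theta> xs bx s r t"
  have kK: "k \<in> K" using k_K[OF s r t] by (simp add: k_def)
  have bk: "\<beta> k = inv\<^bsub>E\<^esub> h4 \<otimes>\<^bsub>E\<^esub> inv\<^bsub>E\<^esub> h3 \<otimes>\<^bsub>E\<^esub> h1 \<otimes>\<^bsub>E\<^esub> h2"
    unfolding k_def obs_k_def Let_def using s r t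
    by (simp add: h1_def h2_def h3_def h4_def)
  also have "\<dots> = inv\<^bsub>E\<^esub> h4 \<otimes>\<^bsub>E\<^esub> inv\<^bsub>E\<^esub> h3 \<otimes>\<^bsub>E\<^esub> (h1 \<otimes>\<^bsub>E\<^esub> h2 \<otimes>\<^bsub>E\<^esub> j (a1 \<otimes>\<^bsub>A\<^esub> a2)) \<otimes>\<^bsub>E\<^esub> inv\<^bsub>E\<^esub> (j (a1 \<otimes>\<^bsub>A\<^esub> a2))"
    using A1 E1 by (simp add: E.m_assoc)
  also have "\<dots> = inv\<^bsub>E\<^esub> h4 \<otimes>\<^bsub>E\<^esub> inv\<^bsub>E\<^esub> h3 \<otimes>\<^bsub>E\<^esub> (h3 \<otimes>\<^bsub>E\<^esub> h4 \<otimes>\<^bsub>E\<^esub> j (a3 \<otimes>\<^bsub>A\<^esub> a4)) \<otimes>\<^bsub>E\<^esub> inv\<^bsub>E\<^esub> (j (a1 \<otimes>\<^bsub>A\<^esub> a2))"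
    by (simp only: eq)
  also have "\<dots> = j (a3 \<otimes>\<^bsub>A\<^esub> a4 \<otimes>\<^bsub>A\<^esub> inv\<^bsub>A\<^esub> (a1 \<otimes>\<^bsub>A\<^esub> a2))"
    using A1 E1 by (simp add: E.m_assoc)
  finally have "j (\<zeta> k) = j (a3 \<otimes>\<^bsub>A\<^esub> a4 \<otimes>\<^bsub>A\<^esub> inv\<^bsub>A\<^esub> (a1 \<otimes>\<^bsub>A\<^esub> a2))" using jz[OF kK] by simp
  hence "\<zeta> k = a3 \<otimes>\<^bsub>A\<^esub> a4 \<otimes>\<^bsub>A\<^esub> inv\<^bsub>A\<^esub> (a1 \<otimes>\<^bsub>A\<^esub> a2)"
    using jinj z_closed[OF kK] A1 by (simp add: inj_on_def)
  also have "\<dots> = a3 \<otimes>\<^bsub>A\<^esub> inv\<^bsub>A\<^esub> a2 \<otimes>\<^bsub>A\<^esub> a4 \<otimes>\<^bsub>A\<^esub> inv\<^bsub>A\<^esub> a1"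
    using A1 by (simp add: A.inv_mult A.m_ac)
  finally show "\<zeta> (obs_k B D d \<theta> xs bx s r t) = g r t \<otimes>\<^bsub>A\<^esub> inv\<^bsub>A\<^esub> (g (s \<otimes>\<^bsub>Q\<^esub> r) t) \<otimes>\<^bsub>A\<^esub> g s (r \<otimes>\<^bsub>Q\<^esub> t) \<otimes>\<^bsub>A\<^esub> inv\<^bsub>A\<^esub> (g s r)"
    by (simp add: k_def a1_def a2_def a3_def a4_def)
qed

end

locale cmobs = cmset +
  assumes ov: "obs_vanishes B D d \<theta> A \<zeta> xs bx"
begin

definition "g0 = (SOME g. (\<forall>r \<in> carrier Q. \<forall>s \<in> carrier Q. g r s \<in> carrier A) \<and>
          (\<forall>s \<in> carrier Q. \<forall>r \<in> carrier Q. \<forall>t \<in> carrier Q.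
             \<zeta> (obs_k B D d \<theta> xs bx s r t) = g r t \<otimes>\<^bsub>A\<^esub> inv\<^bsub>A\<^esub> (g (s \<otimes>\<^bsub>Q\<^esub> r) t)
                        \<otimes>\<^bsub>A\<^esub> g s (r \<otimes>\<^bsub>Q\<^esub> t) \<otimes>\<^bsub>A\<^esub> inv\<^bsub>A\<^esub> (g s r)))"

lemma g0_prop: "(\<forall>r \<in> carrier Q. \<forall>s \<in> carrier Q. g0 r s \<in> carrier A) \<and>
          (\<forall>s \<in> carrier Q. \<forall>r \<in> carrier Q. \<forall>t \<in> carrier Q.
             \<zeta> (obs_k B D d \<theta> xs bx s r t) = g0 r t \<otimes>\<^bsub>A\<^esub> inv\<^bsub>A\<^esub> (g0 (s \<otimes>\<^bsub>Q\<^esub> r) t)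
                        \<otimes>\<^bsub>A\<^esub> g0 s (r \<otimes>\<^bsub>Q\<^esub> t) \<otimes>\<^bsub>A\<^esub> inv\<^bsub>A\<^esub> (g0 s r))"
  using ov unfolding obs_vanishes_def coboundary3_def g0_def by (rule someI_ex)

lemma g0A[simp]: "r \<in> carrier Q \<Longrightarrow> s \<in> carrier Q \<Longrightarrow> g0 r s \<in> carrier A" using g0_prop by blast
lemma g0c: "s \<in> carrier Q \<Longrightarrow> r \<in> carrier Q \<Longrightarrow> t \<in> carrier Q \<Longrightarrow>
   \<zeta> (obs_k B D d \<theta> xs bx s r t) = g0 r t \<otimes>\<^bsub>A\<^esub> inv\<^bsub>A\<^esub> (g0 (s \<otimes>\<^bsub>Q\<^esub> r) t) \<otimes>\<^bsub>A\<^esub> g0 s (r \<otimes>\<^bsub>Q\<^esub> t) \<otimes>\<^bsub>A\<^esub> inv\<^bsub>A\<^esub> (g0 s r)"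
  using g0_prop by blast

lemma HH_N1[simp]: "t \<in> carrier Q \<Longrightarrow> HH N t = \<one>\<^bsub>B\<^esub>" by (simp add: H_cc oc2 cc_X)
lemma HH_N2[simp]: "t \<in> carrier Q \<Longrightarrow> HH t N = \<one>\<^bsub>B\<^esub>" by (simp add: H_cc oc2 cc_X)
lemma QN1[simp]: "t \<in> carrier Q \<Longrightarrow> N \<otimes>\<^bsub>Q\<^esub> t = t" using Q.l_one[of t] by (simp add: Q_one)
lemma QN2[simp]: "t \<in> carrier Q \<Longrightarrow> t \<otimes>\<^bsub>Q\<^esub> N = t" using Q.r_one[of t] by (simp add: Q_one)

lemma g0_N1: "t \<in> carrier Q \<Longrightarrow> g0 N t = g0 N N"
proof -
  assume t: "t \<in> carrier Q"
  have "obs_k B D d \<theta> xs bx N N t = \<one>\<^bsub>B\<^esub>"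
    using t N_Q unfolding obs_k_def Let_def by (simp add: oc2 thone)
  hence "\<one>\<^bsub>A\<^esub> = g0 N t \<otimes>\<^bsub>A\<^esub> inv\<^bsub>A\<^esub> (g0 N t) \<otimes>\<^bsub>A\<^esub> g0 N t \<otimes>\<^bsub>A\<^esub> inv\<^bsub>A\<^esub> (g0 N N)"
    using g0c[OF N_Q N_Q t] t N_Q by (simp add: z_one)
  hence e: "g0 N t \<otimes>\<^bsub>A\<^esub> inv\<^bsub>A\<^esub> (g0 N N) = \<one>\<^bsub>A\<^esub>" using t N_Q by simp
  have "g0 N t = g0 N t \<otimes>\<^bsub>A\<^esub> inv\<^bsub>A\<^esub> (g0 N N) \<otimes>\<^bsub>A\<^esub> g0 N N" using t N_Q by (simp add: A.m_assoc)
  also have "\<dots> = g0 N N" using N_Q by (simp only: e A.l_one g0A)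
  finally show ?thesis .
qed

lemma g0_N2: "t \<in> carrier Q \<Longrightarrow> g0 t N = g0 N N"
proof -
  assume t: "t \<in> carrier Q"
  have "obs_k B D d \<theta> xs bx t N N = \<one>\<^bsub>B\<^esub>"
    using t N_Q unfolding obs_k_def Let_def by (simp add: oc2 thone)
  hence "\<one>\<^bsub>A\<^esub> = g0 N N \<otimes>\<^bsub>A\<^esub> inv\<^bsub>A\<^esub> (g0 t N) \<otimes>\<^bsub>A\<^esub> g0 t N \<otimes>\<^bsub>A\<^esub> inv\<^bsub>A\<^esub> (g0 t N)"
    using g0c[OF t N_Q N_Q] t N_Q by (simp add: z_one)
  hence e: "g0 N N \<otimes>\<^bsub>A\<^esub> inv\<^bsub>A\<^esub> (g0 t N) = \<one>\<^bsub>A\<^esub>" using t N_Q by (simp add: A.m_assoc)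
  have "g0 N N = g0 N N \<otimes>\<^bsub>A\<^esub> inv\<^bsub>A\<^esub> (g0 t N) \<otimes>\<^bsub>A\<^esub> g0 t N" using t N_Q by (simp add: A.m_assoc)
  also have "\<dots> = g0 t N" using N_Q t by (simp only: e A.l_one g0A)
  finally show ?thesis by simp
qed

definition "g r s = g0 r s \<otimes>\<^bsub>A\<^esub> inv\<^bsub>A\<^esub> (g0 N N)"
lemma gA[simp]: "r \<in> carrier Q \<Longrightarrow> s \<in> carrier Q \<Longrightarrow> g r s \<in> carrier A" using N_Q by (simp add: g_def)
lemma g_N1[simp]: "t \<in> carrier Q \<Longrightarrow> g N t = \<one>\<^bsub>A\<^esub>" using N_Q by (simp add: g_def g0_N1[of t])
lemma g_N2[simp]: "t \<in> carrier Q \<Longrightarrow> g t N = \<one>\<^bsub>A\<^esub>" using N_Q by (simp add: g_def g0_N2[of t])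

lemma invfree: "x \<in> carrier A \<Longrightarrow> a \<in> carrier A \<Longrightarrow> b \<in> carrier A \<Longrightarrow> c \<in> carrier A \<Longrightarrow> e \<in> carrier A \<Longrightarrow>
  x = a \<otimes>\<^bsub>A\<^esub> inv\<^bsub>A\<^esub> b \<otimes>\<^bsub>A\<^esub> c \<otimes>\<^bsub>A\<^esub> inv\<^bsub>A\<^esub> e \<Longrightarrow> x \<otimes>\<^bsub>A\<^esub> b \<otimes>\<^bsub>A\<^esub> e = a \<otimes>\<^bsub>A\<^esub> c"
proof -
  assume h: "x \<in> carrier A" "a \<in> carrier A" "b \<in> carrier A" "c \<in> carrier A" "e \<in> carrier A"
    and x: "x = a \<otimes>\<^bsub>A\<^esub> inv\<^bsub>A\<^esub> b \<otimes>\<^bsub>A\<^esub> c \<otimes>\<^bsub>A\<^esub> inv\<^bsub>A\<^esub> e"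
  have "x \<otimes>\<^bsub>A\<^esub> b \<otimes>\<^bsub>A\<^esub> e = (a \<otimes>\<^bsub>A\<^esub> c) \<otimes>\<^bsub>A\<^esub> (inv\<^bsub>A\<^esub> b \<otimes>\<^bsub>A\<^esub> b) \<otimes>\<^bsub>A\<^esub> (inv\<^bsub>A\<^esub> e \<otimes>\<^bsub>A\<^esub> e)" using h by (simp only: x A.m_ac A.m_closed A.inv_closed)
  also have "\<dots> = a \<otimes>\<^bsub>A\<^esub> c" using h by simp
  finally show ?thesis .
qed

lemma gc: "s \<in> carrier Q \<Longrightarrow> r \<in> carrier Q \<Longrightarrow> t \<in> carrier Q \<Longrightarrow>
   \<zeta> (obs_k B D d \<theta> xs bx s r t) \<otimes>\<^bsub>A\<^esub> g (s \<otimes>\<^bsub>Q\<^esub> r) t \<otimes>\<^bsub>A\<^esub> g s r = g r t \<otimes>\<^bsub>A\<^esub> g s (r \<otimes>\<^bsub>Q\<^esub> t)"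
proof -
  assume s: "s \<in> carrier Q" and r: "r \<in> carrier Q" and t: "t \<in> carrier Q"
  define ic where "ic = inv\<^bsub>A\<^esub> (g0 N N)"
  have ic: "ic \<in> carrier A" using N_Q by (simp add: ic_def)
  have k: "\<zeta> (obs_k B D d \<theta> xs bx s r t) \<in> carrier A" using k_K[OF s r t] by (rule z_closed)
  have e: "\<zeta> (obs_k B D d \<theta> xs bx s r t) \<otimes>\<^bsub>A\<^esub> g0 (s \<otimes>\<^bsub>Q\<^esub> r) t \<otimes>\<^bsub>A\<^esub> g0 s r = g0 r t \<otimes>\<^bsub>A\<^esub> g0 s (r \<otimes>\<^bsub>Q\<^esub> t)"
    using invfree[OF k _ _ _ _ g0c[OF s r t]] s r t by simp
  have "\<zeta> (obs_k B D d \<theta> xs bx s r t) \<otimes>\<^bsub>A\<^esub> g (s \<otimes>\<^bsub>Q\<^esub> r) t \<otimes>\<^bsub>A\<^esub> g s r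
     = (\<zeta> (obs_k B D d \<theta> xs bx s r t) \<otimes>\<^bsub>A\<^esub> g0 (s \<otimes>\<^bsub>Q\<^esub> r) t \<otimes>\<^bsub>A\<^esub> g0 s r) \<otimes>\<^bsub>A\<^esub> ic \<otimes>\<^bsub>A\<^esub> ic"
    using s r t ic k by (simp add: g_def ic_def[symmetric] A.m_ac)
  also have "\<dots> = (g0 r t \<otimes>\<^bsub>A\<^esub> g0 s (r \<otimes>\<^bsub>Q\<^esub> t)) \<otimes>\<^bsub>A\<^esub> ic \<otimes>\<^bsub>A\<^esub> ic" by (simp only: e)
  also have "\<dots> = g r t \<otimes>\<^bsub>A\<^esub> g s (r \<otimes>\<^bsub>Q\<^esub> t)"
    using s r t ic k by (simp add: g_def ic_def[symmetric] A.m_ac)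
  finally show ?thesis .
qed

lemma dcc: "x \<in> carrier D \<Longrightarrow> d (cc x) = x \<otimes>\<^bsub>D\<^esub> inv\<^bsub>D\<^esub> (xs (cl x))"
proof -
  assume x: "x \<in> carrier D"
  have "d (cc x) = d (cc x) \<otimes>\<^bsub>D\<^esub> xs (cl x) \<otimes>\<^bsub>D\<^esub> inv\<^bsub>D\<^esub> (xs (cl x))" using x by (simp add: D.m_assoc)
  also have "\<dots> = x \<otimes>\<^bsub>D\<^esub> inv\<^bsub>D\<^esub> (xs (cl x))" using cc_eq[OF x] by simp
  finally show ?thesis .
qed

lemma \<theta>_swap: "s \<in> carrier Q \<Longrightarrow> t \<in> carrier Q \<Longrightarrow> b \<in> carrier B \<Longrightarrow>
  \<theta> (xs s) (\<theta> (xs t) b) \<otimes>\<^bsub>B\<^esub> HH s t = HH s t \<otimes>\<^bsub>B\<^esub> \<theta> (xs (s \<otimes>\<^bsub>Q\<^esub> t)) b"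
proof -
  assume s: "s \<in> carrier Q" and t: "t \<in> carrier Q" and b: "b \<in> carrier B"
  have "\<theta> (xs s) (\<theta> (xs t) b) = \<theta> (xs s \<otimes>\<^bsub>D\<^esub> xs t) b" using s t b by (simp add: thmult)
  also have "\<dots> = HH s t \<otimes>\<^bsub>B\<^esub> \<theta> (xs (s \<otimes>\<^bsub>Q\<^esub> t)) b \<otimes>\<^bsub>B\<^esub> inv\<^bsub>B\<^esub> (HH s t)"
    using th_cc[of "xs s \<otimes>\<^bsub>D\<^esub> xs t" b] s t b by (simp add: cl_XX H_cc)
  finally have e: "\<theta> (xs s) (\<theta> (xs t) b) = HH s t \<otimes>\<^bsub>B\<^esub> \<theta> (xs (s \<otimes>\<^bsub>Q\<^esub> t)) b \<otimes>\<^bsub>B\<^esub> inv\<^bsub>B\<^esub> (HH s t)" .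
  show ?thesis using s t b by (simp add: e B.m_assoc)
qed

definition "mm x y = cc x \<otimes>\<^bsub>B\<^esub> \<theta> (xs (cl x)) (cc y) \<otimes>\<^bsub>B\<^esub> HH (cl x) (cl y)"
definition "kap x y = inv\<^bsub>B\<^esub> (cc (x \<otimes>\<^bsub>D\<^esub> y)) \<otimes>\<^bsub>B\<^esub> mm x y"
definition "phi x y = \<zeta> (kap x y) \<otimes>\<^bsub>A\<^esub> g (cl x) (cl y)"

lemma mm_B[simp]: "x \<in> carrier D \<Longrightarrow> y \<in> carrier D \<Longrightarrow> mm x y \<in> carrier B"
  by (simp add: mm_def)
lemma kap_B[simp]: "x \<in> carrier D \<Longrightarrow> y \<in> carrier D \<Longrightarrow> kap x y \<in> carrier B"
  by (simp add: kap_def)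
lemma kap_K: "x \<in> carrier D \<Longrightarrow> y \<in> carrier D \<Longrightarrow> kap x y \<in> K"
  unfolding K_iff using kap_B
  by (simp add: kap_def mm_def dcc dth HH_d cl_mult D.inv_mult_group D.m_assoc)
lemma phi_A[simp]: "x \<in> carrier D \<Longrightarrow> y \<in> carrier D \<Longrightarrow> phi x y \<in> carrier A"
  by (simp add: phi_def z_closed kap_K)
lemma cc_mult_kap: "x \<in> carrier D \<Longrightarrow> y \<in> carrier D \<Longrightarrow> cc (x \<otimes>\<^bsub>D\<^esub> y) \<otimes>\<^bsub>B\<^esub> kap x y = mm x y"
  by (simp add: kap_def)

lemma phi_1y[simp]: "y \<in> carrier D \<Longrightarrow> phi \<one>\<^bsub>D\<^esub> y = \<one>\<^bsub>A\<^esub>"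
  by (simp add: phi_def kap_def mm_def cl_one' oc2 thone z_one)
lemma phi_x1[simp]: "x \<in> carrier D \<Longrightarrow> phi x \<one>\<^bsub>D\<^esub> = \<one>\<^bsub>A\<^esub>"
  using N_Q by (simp add: phi_def kap_def mm_def cl_one' oc2 z_one)

lemma kap_coc: "x \<in> carrier D \<Longrightarrow> y \<in> carrier D \<Longrightarrow> z \<in> carrier D \<Longrightarrow>
  kap x y \<otimes>\<^bsub>B\<^esub> kap (x \<otimes>\<^bsub>D\<^esub> y) z = kap x (y \<otimes>\<^bsub>D\<^esub> z) \<otimes>\<^bsub>B\<^esub> (\<theta> (xs (cl x)) (kap y z) \<otimes>\<^bsub>B\<^esub> obs_k B D d \<theta> xs bx (cl x) (cl y) (cl z))"
proof -
  assume x: "x \<in> carrier D" and y: "y \<in> carrier D" and z: "z \<in> carrier D"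
  define s where "s = cl x"
  define t where "t = cl y"
  define u where "u = cl z"
  have Q: "s \<in> carrier Q" "t \<in> carrier Q" "u \<in> carrier Q" using x y z by (simp_all add: s_def t_def u_def)
  define cxyz where "cxyz = cc (x \<otimes>\<^bsub>D\<^esub> y \<otimes>\<^bsub>D\<^esub> z)"
  have cxyz2: "cc (x \<otimes>\<^bsub>D\<^esub> (y \<otimes>\<^bsub>D\<^esub> z)) = cxyz" using x y z by (simp add: cxyz_def D.m_assoc)
  define k1 where "k1 = kap x y"
  define k2 where "k2 = kap (x \<otimes>\<^bsub>D\<^esub> y) z"
  define k3 where "k3 = \<theta> (xs s) (kap y z)"
  define k4 where "k4 = kap x (y \<otimes>\<^bsub>D\<^esub> z)"
  define k where "k = obs_k B D d \<theta> xs bx s t u"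
  define T where "T = \<theta> (xs (s \<otimes>\<^bsub>Q\<^esub> t)) (cc z) \<otimes>\<^bsub>B\<^esub> HH (s \<otimes>\<^bsub>Q\<^esub> t) u"
  have KK: "k1 \<in> K" "k2 \<in> K" "k3 \<in> K" "k4 \<in> K" "k \<in> K"
    using x y z Q by (simp_all add: k1_def k2_def k3_def k4_def k_def kap_K K_th k_K s_def)
  have BB: "k1 \<in> carrier B" "k2 \<in> carrier B" "k3 \<in> carrier B" "k4 \<in> carrier B" "k \<in> carrier B"
    using KK by (simp_all add: K_iff)
  have TB: "T \<in> carrier B" using Q z by (simp add: T_def)
  have cB: "cxyz \<in> carrier B" using x y z by (simp add: cxyz_def)
  have P: "cxyz \<otimes>\<^bsub>B\<^esub> (k1 \<otimes>\<^bsub>B\<^esub> k2) = mm x y \<otimes>\<^bsub>B\<^esub> T"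
  proof -
    have "cxyz \<otimes>\<^bsub>B\<^esub> (k1 \<otimes>\<^bsub>B\<^esub> k2) = cxyz \<otimes>\<^bsub>B\<^esub> (k2 \<otimes>\<^bsub>B\<^esub> k1)" using K_central[OF KK(1) BB(2)] by simp
    also have "\<dots> = mm (x \<otimes>\<^bsub>D\<^esub> y) z \<otimes>\<^bsub>B\<^esub> k1"
      using x y z BB by (simp add: k2_def kap_def cxyz_def B.m_assoc[symmetric])
    also have "\<dots> = cc (x \<otimes>\<^bsub>D\<^esub> y) \<otimes>\<^bsub>B\<^esub> T \<otimes>\<^bsub>B\<^esub> k1"
      using x y z by (simp add: mm_def T_def s_def t_def u_def cl_mult B.m_assoc)
    also have "\<dots> = cc (x \<otimes>\<^bsub>D\<^esub> y) \<otimes>\<^bsub>B\<^esub> (k1 \<otimes>\<^bsub>B\<^esub> T)"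
      using x y BB TB K_central[OF KK(1) TB] by (simp add: B.m_assoc)
    also have "\<dots> = mm x y \<otimes>\<^bsub>B\<^esub> T"
      using x y BB TB by (simp add: k1_def cc_mult_kap B.m_assoc[symmetric])
    finally show ?thesis .
  qed
  have P': "cxyz \<otimes>\<^bsub>B\<^esub> (k4 \<otimes>\<^bsub>B\<^esub> (k3 \<otimes>\<^bsub>B\<^esub> k)) = mm x y \<otimes>\<^bsub>B\<^esub> T"
  proof -
    have "cxyz \<otimes>\<^bsub>B\<^esub> (k4 \<otimes>\<^bsub>B\<^esub> (k3 \<otimes>\<^bsub>B\<^esub> k)) = (cxyz \<otimes>\<^bsub>B\<^esub> k4) \<otimes>\<^bsub>B\<^esub> (k3 \<otimes>\<^bsub>B\<^esub> k)"
      using cB BB by (simp add: B.m_assoc)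
    also have "\<dots> = mm x (y \<otimes>\<^bsub>D\<^esub> z) \<otimes>\<^bsub>B\<^esub> (k3 \<otimes>\<^bsub>B\<^esub> k)"
      using x y z cc_mult_kap[of x "y \<otimes>\<^bsub>D\<^esub> z"] by (simp add: k4_def cxyz2)
    also have "\<dots> = cc x \<otimes>\<^bsub>B\<^esub> (\<theta> (xs s) (cc (y \<otimes>\<^bsub>D\<^esub> z)) \<otimes>\<^bsub>B\<^esub> (HH s (t \<otimes>\<^bsub>Q\<^esub> u) \<otimes>\<^bsub>B\<^esub> (k3 \<otimes>\<^bsub>B\<^esub> k)))"
      using x y z Q BB by (simp add: mm_def s_def t_def u_def cl_mult B.m_assoc)
    also have "\<dots> = cc x \<otimes>\<^bsub>B\<^esub> (\<theta> (xs s) (cc (y \<otimes>\<^bsub>D\<^esub> z)) \<otimes>\<^bsub>B\<^esub> (k3 \<otimes>\<^bsub>B\<^esub> (HH s (t \<otimes>\<^bsub>Q\<^esub> u) \<otimes>\<^bsub>B\<^esub> k)))"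
      using x y z Q BB K_central[OF KK(3), of "HH s (t \<otimes>\<^bsub>Q\<^esub> u)"] by (simp add: B.m_assoc[symmetric])
    also have "\<dots> = cc x \<otimes>\<^bsub>B\<^esub> ((\<theta> (xs s) (cc (y \<otimes>\<^bsub>D\<^esub> z)) \<otimes>\<^bsub>B\<^esub> k3) \<otimes>\<^bsub>B\<^esub> (HH s (t \<otimes>\<^bsub>Q\<^esub> u) \<otimes>\<^bsub>B\<^esub> k))"
      using x y z Q BB by (simp add: B.m_assoc)
    also have "\<dots> = cc x \<otimes>\<^bsub>B\<^esub> (\<theta> (xs s) (mm y z) \<otimes>\<^bsub>B\<^esub> (HH s (t \<otimes>\<^bsub>Q\<^esub> u) \<otimes>\<^bsub>B\<^esub> k))"
      using x y z Q BB cc_mult_kap[OF y z] by (simp add: k3_def th_mult[symmetric] del: th_mult)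
    also have "\<dots> = cc x \<otimes>\<^bsub>B\<^esub> (\<theta> (xs s) (cc y) \<otimes>\<^bsub>B\<^esub> (\<theta> (xs s) (\<theta> (xs t) (cc z)) \<otimes>\<^bsub>B\<^esub> (\<theta> (xs s) (HH t u) \<otimes>\<^bsub>B\<^esub> (HH s (t \<otimes>\<^bsub>Q\<^esub> u) \<otimes>\<^bsub>B\<^esub> k))))"
      using x y z Q BB by (simp add: mm_def t_def u_def B.m_assoc)
    also have "\<dots> = cc x \<otimes>\<^bsub>B\<^esub> (\<theta> (xs s) (cc y) \<otimes>\<^bsub>B\<^esub> (\<theta> (xs s) (\<theta> (xs t) (cc z)) \<otimes>\<^bsub>B\<^esub> (HH s t \<otimes>\<^bsub>B\<^esub> HH (s \<otimes>\<^bsub>Q\<^esub> t) u)))"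
      using x y z Q by (simp add: k_def obs_k_def Let_def B.m_assoc)
    also have "\<dots> = cc x \<otimes>\<^bsub>B\<^esub> (\<theta> (xs s) (cc y) \<otimes>\<^bsub>B\<^esub> (HH s t \<otimes>\<^bsub>B\<^esub> (\<theta> (xs (s \<otimes>\<^bsub>Q\<^esub> t)) (cc z) \<otimes>\<^bsub>B\<^esub> HH (s \<otimes>\<^bsub>Q\<^esub> t) u)))"
      using x y z Q \<theta>_swap[of s t "cc z"] by (simp add: B.m_assoc[symmetric])
    also have "\<dots> = mm x y \<otimes>\<^bsub>B\<^esub> T"
      using x y z Q by (simp add: mm_def T_def s_def t_def B.m_assoc)
    finally show ?thesis .
  qed
  have e: "cxyz \<otimes>\<^bsub>B\<^esub> (k1 \<otimes>\<^bsub>B\<^esub> k2) = cxyz \<otimes>\<^bsub>B\<^esub> (k4 \<otimes>\<^bsub>B\<^esub> (k3 \<otimes>\<^bsub>B\<^esub> k))" using P P' by simp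
  have "k1 \<otimes>\<^bsub>B\<^esub> k2 = k4 \<otimes>\<^bsub>B\<^esub> (k3 \<otimes>\<^bsub>B\<^esub> k)"
    using B.Units_l_cancel[of cxyz "k1 \<otimes>\<^bsub>B\<^esub> k2" "k4 \<otimes>\<^bsub>B\<^esub> (k3 \<otimes>\<^bsub>B\<^esub> k)"] e cB BB B.Units_eq by simp
  thus ?thesis by (simp add: k1_def k2_def k3_def k4_def k_def s_def t_def u_def B.m_assoc)
qed


lemma phi_coc: "x \<in> carrier D \<Longrightarrow> y \<in> carrier D \<Longrightarrow> z \<in> carrier D \<Longrightarrow>
  phi x y \<otimes>\<^bsub>A\<^esub> phi (x \<otimes>\<^bsub>D\<^esub> y) z = phi y z \<otimes>\<^bsub>A\<^esub> phi x (y \<otimes>\<^bsub>D\<^esub> z)"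
proof -
  assume x: "x \<in> carrier D" and y: "y \<in> carrier D" and z: "z \<in> carrier D"
  define s where "s = cl x"
  define t where "t = cl y"
  define u where "u = cl z"
  have Q: "s \<in> carrier Q" "t \<in> carrier Q" "u \<in> carrier Q" using x y z by (simp_all add: s_def t_def u_def)
  define z1 where "z1 = \<zeta> (kap x y)"
  define z2 where "z2 = \<zeta> (kap (x \<otimes>\<^bsub>D\<^esub> y) z)"
  define z3 where "z3 = \<zeta> (kap y z)"
  define z4 where "z4 = \<zeta> (kap x (y \<otimes>\<^bsub>D\<^esub> z))"
  define zk where "zk = \<zeta> (obs_k B D d \<theta> xs bx s t u)"
  define G1 where "G1 = g s t"
  define G2 where "G2 = g (s \<otimes>\<^bsub>Q\<^esub> t) u"
  define G3 where "G3 = g t u"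
  define G4 where "G4 = g s (t \<otimes>\<^bsub>Q\<^esub> u)"
  have AA: "z1 \<in> carrier A" "z2 \<in> carrier A" "z3 \<in> carrier A" "z4 \<in> carrier A" "zk \<in> carrier A"
    "G1 \<in> carrier A" "G2 \<in> carrier A" "G3 \<in> carrier A" "G4 \<in> carrier A"
    using x y z Q by (simp_all add: z1_def z2_def z3_def z4_def zk_def G1_def G2_def G3_def G4_def z_closed kap_K k_K)
  have K3: "\<theta> (xs s) (kap y z) \<in> K" using Q y z by (simp add: K_th kap_K)
  have Kk: "obs_k B D d \<theta> xs bx s t u \<in> K" using Q by (simp add: k_K)
  have "z1 \<otimes>\<^bsub>A\<^esub> z2 = \<zeta> (kap x y \<otimes>\<^bsub>B\<^esub> kap (x \<otimes>\<^bsub>D\<^esub> y) z)"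
    using x y z by (simp add: z1_def z2_def z_mult kap_K)
  also have "\<dots> = \<zeta> (kap x (y \<otimes>\<^bsub>D\<^esub> z) \<otimes>\<^bsub>B\<^esub> (\<theta> (xs s) (kap y z) \<otimes>\<^bsub>B\<^esub> obs_k B D d \<theta> xs bx s t u))"
    using kap_coc[OF x y z] by (simp add: s_def t_def u_def)
  also have "\<dots> = z4 \<otimes>\<^bsub>A\<^esub> (\<zeta> (\<theta> (xs s) (kap y z)) \<otimes>\<^bsub>A\<^esub> zk)"
    using x y z K3 Kk by (simp add: z4_def zk_def z_mult kap_K K_mult)
  also have "\<dots> = z4 \<otimes>\<^bsub>A\<^esub> (z3 \<otimes>\<^bsub>A\<^esub> zk)"
    using Q y z by (simp add: z3_def zth kap_K)
  finally have kc: "z1 \<otimes>\<^bsub>A\<^esub> z2 = z4 \<otimes>\<^bsub>A\<^esub> (z3 \<otimes>\<^bsub>A\<^esub> zk)" .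
  have gg: "zk \<otimes>\<^bsub>A\<^esub> G2 \<otimes>\<^bsub>A\<^esub> G1 = G3 \<otimes>\<^bsub>A\<^esub> G4" using gc[OF Q] by (simp add: zk_def G1_def G2_def G3_def G4_def)
  have "phi x y \<otimes>\<^bsub>A\<^esub> phi (x \<otimes>\<^bsub>D\<^esub> y) z = (z1 \<otimes>\<^bsub>A\<^esub> z2) \<otimes>\<^bsub>A\<^esub> G1 \<otimes>\<^bsub>A\<^esub> G2"
    using x y z AA by (simp add: phi_def z1_def[symmetric] z2_def[symmetric] G1_def G2_def s_def t_def u_def cl_mult A.m_ac)
  also have "\<dots> = z4 \<otimes>\<^bsub>A\<^esub> z3 \<otimes>\<^bsub>A\<^esub> (zk \<otimes>\<^bsub>A\<^esub> G2 \<otimes>\<^bsub>A\<^esub> G1)" using AA by (simp add: kc A.m_ac)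
  also have "\<dots> = z4 \<otimes>\<^bsub>A\<^esub> z3 \<otimes>\<^bsub>A\<^esub> (G3 \<otimes>\<^bsub>A\<^esub> G4)" by (simp only: gg)
  also have "\<dots> = phi y z \<otimes>\<^bsub>A\<^esub> phi x (y \<otimes>\<^bsub>D\<^esub> z)"
    using x y z AA by (simp add: phi_def z3_def[symmetric] z4_def[symmetric] G3_def G4_def s_def t_def u_def cl_mult A.m_ac)
  finally show ?thesis .
qed

definition EE where
  "EE = \<lparr>carrier = carrier A \<times> carrier D,
         monoid.mult = (\<lambda>e f. (fst e \<otimes>\<^bsub>A\<^esub> fst f \<otimes>\<^bsub>A\<^esub> phi (snd e) (snd f), snd e \<otimes>\<^bsub>D\<^esub> snd f)),
         one = (\<one>\<^bsub>A\<^esub>, \<one>\<^bsub>D\<^esub>)\<rparr>"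

lemma EE_carrier: "carrier EE = carrier A \<times> carrier D" by (simp add: EE_def)
lemma EE_mult: "(a, x) \<otimes>\<^bsub>EE\<^esub> (b, y) = (a \<otimes>\<^bsub>A\<^esub> b \<otimes>\<^bsub>A\<^esub> phi x y, x \<otimes>\<^bsub>D\<^esub> y)" by (simp add: EE_def)
lemma EE_one: "\<one>\<^bsub>EE\<^esub> = (\<one>\<^bsub>A\<^esub>, \<one>\<^bsub>D\<^esub>)" by (simp add: EE_def)

lemma EE_group: "group EE"
proof (rule groupI)
  fix e f assume "e \<in> carrier EE" "f \<in> carrier EE"
  thus "e \<otimes>\<^bsub>EE\<^esub> f \<in> carrier EE" by (auto simp: EE_def)
next
  show "\<one>\<^bsub>EE\<^esub> \<in> carrier EE" by (simp add: EE_def)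
next
  fix e f h assume "e \<in> carrier EE" "f \<in> carrier EE" "h \<in> carrier EE"
  then obtain a x b y c z where e: "e = (a, x)" "f = (b, y)" "h = (c, z)"
    and m: "a \<in> carrier A" "x \<in> carrier D" "b \<in> carrier A" "y \<in> carrier D" "c \<in> carrier A" "z \<in> carrier D"
    by (auto simp: EE_carrier)
  have "a \<otimes>\<^bsub>A\<^esub> b \<otimes>\<^bsub>A\<^esub> phi x y \<otimes>\<^bsub>A\<^esub> c \<otimes>\<^bsub>A\<^esub> phi (x \<otimes>\<^bsub>D\<^esub> y) z = a \<otimes>\<^bsub>A\<^esub> b \<otimes>\<^bsub>A\<^esub> c \<otimes>\<^bsub>A\<^esub> (phi x y \<otimes>\<^bsub>A\<^esub> phi (x \<otimes>\<^bsub>D\<^esub> y) z)"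
    using m by (simp add: A.m_ac)
  also have "\<dots> = a \<otimes>\<^bsub>A\<^esub> b \<otimes>\<^bsub>A\<^esub> c \<otimes>\<^bsub>A\<^esub> (phi y z \<otimes>\<^bsub>A\<^esub> phi x (y \<otimes>\<^bsub>D\<^esub> z))" using m by (simp add: phi_coc)
  also have "\<dots> = a \<otimes>\<^bsub>A\<^esub> (b \<otimes>\<^bsub>A\<^esub> c \<otimes>\<^bsub>A\<^esub> phi y z) \<otimes>\<^bsub>A\<^esub> phi x (y \<otimes>\<^bsub>D\<^esub> z)" using m by (simp add: A.m_ac)
  finally show "e \<otimes>\<^bsub>EE\<^esub> f \<otimes>\<^bsub>EE\<^esub> h = e \<otimes>\<^bsub>EE\<^esub> (f \<otimes>\<^bsub>EE\<^esub> h)"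
    using m by (simp add: e EE_mult D.m_assoc)
next
  fix e assume "e \<in> carrier EE"
  thus "\<one>\<^bsub>EE\<^esub> \<otimes>\<^bsub>EE\<^esub> e = e" by (auto simp: EE_def)
next
  fix e assume "e \<in> carrier EE"
  then obtain a x where e: "e = (a, x)" and m: "a \<in> carrier A" "x \<in> carrier D" by (auto simp: EE_carrier)
  define f where "f = inv\<^bsub>A\<^esub> a \<otimes>\<^bsub>A\<^esub> inv\<^bsub>A\<^esub> (phi (inv\<^bsub>D\<^esub> x) x)"
  have fA: "f \<in> carrier A" using m by (simp add: f_def)
  have "f \<otimes>\<^bsub>A\<^esub> a \<otimes>\<^bsub>A\<^esub> phi (inv\<^bsub>D\<^esub> x) x = (inv\<^bsub>A\<^esub> a \<otimes>\<^bsub>A\<^esub> a) \<otimes>\<^bsub>A\<^esub> (inv\<^bsub>A\<^esub> (phi (inv\<^bsub>D\<^esub> x) x) \<otimes>\<^bsub>A\<^esub> phi (inv\<^bsub>D\<^esub> x) x)"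
    using m by (simp add: f_def A.m_ac)
  also have "\<dots> = \<one>\<^bsub>A\<^esub>" using m by simp
  finally have "(f, inv\<^bsub>D\<^esub> x) \<otimes>\<^bsub>EE\<^esub> e = \<one>\<^bsub>EE\<^esub>" using m by (simp add: e EE_mult EE_one)
  thus "\<exists>y \<in> carrier EE. y \<otimes>\<^bsub>EE\<^esub> e = \<one>\<^bsub>EE\<^esub>" using fA m by (intro bexI[of _ "(f, inv\<^bsub>D\<^esub> x)"]) (auto simp: EE_carrier)
qed

sublocale EE: group EE by (rule EE_group)


lemma cl_N: "b \<in> carrier B \<Longrightarrow> cl (d b) = N"
  unfolding cl_def using D.coset_join2[of "d b" N] N_sub by simp
lemma dcc_d: "b \<in> carrier B \<Longrightarrow> d (cc (d b)) = d b"
  using dcc[of "d b"] by (simp add: cl_N oc2)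
lemma beK: "b \<in> carrier B \<Longrightarrow> inv\<^bsub>B\<^esub> (cc (d b)) \<otimes>\<^bsub>B\<^esub> b \<in> K"
  by (simp add: K_iff dcc_d)

definition "jj a = (a, \<one>\<^bsub>D\<^esub>)"
definition "bb b = (\<zeta> (inv\<^bsub>B\<^esub> (cc (d b)) \<otimes>\<^bsub>B\<^esub> b), d b)"

lemma bb_E: "b \<in> carrier B \<Longrightarrow> bb b \<in> carrier EE"
  by (simp add: bb_def EE_carrier z_closed beK)

lemma bb_mult: "b \<in> carrier B \<Longrightarrow> b' \<in> carrier B \<Longrightarrow> bb (b \<otimes>\<^bsub>B\<^esub> b') = bb b \<otimes>\<^bsub>EE\<^esub> bb b'"
proof -
  assume b: "b \<in> carrier B" and b': "b' \<in> carrier B"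
  define c where "c = cc (d b)"
  define c' where "c' = cc (d b')"
  define c'' where "c'' = cc (d b \<otimes>\<^bsub>D\<^esub> d b')"
  define ka where "ka = inv\<^bsub>B\<^esub> c \<otimes>\<^bsub>B\<^esub> b"
  define kb where "kb = inv\<^bsub>B\<^esub> c' \<otimes>\<^bsub>B\<^esub> b'"
  define kc where "kc = inv\<^bsub>B\<^esub> c'' \<otimes>\<^bsub>B\<^esub> (c \<otimes>\<^bsub>B\<^esub> c')"
  have cs: "c \<in> carrier B" "c' \<in> carrier B" "c'' \<in> carrier B" using b b' by (simp_all add: c_def c'_def c''_def)
  have KK: "ka \<in> K" "kb \<in> K" using b b' by (simp_all add: ka_def kb_def c_def c'_def beK)
  have kcK: "kc \<in> K" using kap_K[of "d b" "d b'"] b b' N_Q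
    by (simp add: kap_def mm_def kc_def c_def c'_def c''_def cl_N oc2 thone)
  have BB: "ka \<in> carrier B" "kb \<in> carrier B" "kc \<in> carrier B" using KK kcK by (simp_all add: K_iff)
  have phi: "phi (d b) (d b') = \<zeta> kc" using b b' N_Q z_closed[OF kcK]
    by (simp add: phi_def kap_def mm_def kc_def c_def c'_def c''_def cl_N oc2 thone)
  have "c'' \<otimes>\<^bsub>B\<^esub> (ka \<otimes>\<^bsub>B\<^esub> (kb \<otimes>\<^bsub>B\<^esub> kc)) = c'' \<otimes>\<^bsub>B\<^esub> (kc \<otimes>\<^bsub>B\<^esub> (ka \<otimes>\<^bsub>B\<^esub> kb))"
    using BB K_central[OF kcK, of "ka \<otimes>\<^bsub>B\<^esub> kb"] by (simp add: B.m_assoc)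
  also have "\<dots> = c \<otimes>\<^bsub>B\<^esub> (c' \<otimes>\<^bsub>B\<^esub> (ka \<otimes>\<^bsub>B\<^esub> kb))" using cs BB by (simp add: kc_def B.m_assoc)
  also have "\<dots> = c \<otimes>\<^bsub>B\<^esub> (ka \<otimes>\<^bsub>B\<^esub> (c' \<otimes>\<^bsub>B\<^esub> kb))" using cs BB K_central[OF KK(1) cs(2)] by (simp add: B.m_assoc[symmetric])
  also have "\<dots> = b \<otimes>\<^bsub>B\<^esub> b'" using cs b b' by (simp add: ka_def kb_def B.m_assoc)
  also have "\<dots> = c'' \<otimes>\<^bsub>B\<^esub> (inv\<^bsub>B\<^esub> c'' \<otimes>\<^bsub>B\<^esub> (b \<otimes>\<^bsub>B\<^esub> b'))" using cs b b' by simp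
  finally have "c'' \<otimes>\<^bsub>B\<^esub> (ka \<otimes>\<^bsub>B\<^esub> (kb \<otimes>\<^bsub>B\<^esub> kc)) = c'' \<otimes>\<^bsub>B\<^esub> (inv\<^bsub>B\<^esub> c'' \<otimes>\<^bsub>B\<^esub> (b \<otimes>\<^bsub>B\<^esub> b'))" .
  hence e: "ka \<otimes>\<^bsub>B\<^esub> (kb \<otimes>\<^bsub>B\<^esub> kc) = inv\<^bsub>B\<^esub> c'' \<otimes>\<^bsub>B\<^esub> (b \<otimes>\<^bsub>B\<^esub> b')"
    using B.Units_l_cancel[of c'' "ka \<otimes>\<^bsub>B\<^esub> (kb \<otimes>\<^bsub>B\<^esub> kc)" "inv\<^bsub>B\<^esub> c'' \<otimes>\<^bsub>B\<^esub> (b \<otimes>\<^bsub>B\<^esub> b')"] cs BB b b' B.Units_eq by simp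
  have "\<zeta> (inv\<^bsub>B\<^esub> (cc (d (b \<otimes>\<^bsub>B\<^esub> b'))) \<otimes>\<^bsub>B\<^esub> (b \<otimes>\<^bsub>B\<^esub> b')) = \<zeta> (inv\<^bsub>B\<^esub> c'' \<otimes>\<^bsub>B\<^esub> (b \<otimes>\<^bsub>B\<^esub> b'))"
    using b b' by (simp add: c''_def)
  also have "\<dots> = \<zeta> (ka \<otimes>\<^bsub>B\<^esub> (kb \<otimes>\<^bsub>B\<^esub> kc))" by (simp only: e)
  also have "\<dots> = \<zeta> ka \<otimes>\<^bsub>A\<^esub> \<zeta> kb \<otimes>\<^bsub>A\<^esub> \<zeta> kc"
    using KK kcK by (simp add: z_mult K_mult A.m_assoc z_closed)
  finally have "\<zeta> (inv\<^bsub>B\<^esub> (cc (d (b \<otimes>\<^bsub>B\<^esub> b'))) \<otimes>\<^bsub>B\<^esub> (b \<otimes>\<^bsub>B\<^esub> b')) = \<zeta> ka \<otimes>\<^bsub>A\<^esub> \<zeta> kb \<otimes>\<^bsub>A\<^esub> \<zeta> kc" .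
  thus ?thesis using b b' by (simp add: bb_def EE_mult phi ka_def kb_def c_def c'_def)
qed

lemma bb_conj: "x \<in> carrier D \<Longrightarrow> b \<in> carrier B \<Longrightarrow> bb (\<theta> x b) \<otimes>\<^bsub>EE\<^esub> (a, x) = (a, x) \<otimes>\<^bsub>EE\<^esub> bb b"
  if a: "a \<in> carrier A" for a
proof -
  assume x: "x \<in> carrier D" and b: "b \<in> carrier B"
  define s where "s = cl x"
  have s: "s \<in> carrier Q" using x by (simp add: s_def)
  define d' where "d' = d (\<theta> x b)"
  have d': "d' \<in> carrier D" using x b by (simp add: d'_def)
  have dd: "d' \<otimes>\<^bsub>D\<^esub> x = x \<otimes>\<^bsub>D\<^esub> d b" using x b by (simp add: d'_def dth D.m_assoc)
  define k1 where "k1 = inv\<^bsub>B\<^esub> (cc (d b)) \<otimes>\<^bsub>B\<^esub> b"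
  define k3 where "k3 = inv\<^bsub>B\<^esub> (cc d') \<otimes>\<^bsub>B\<^esub> \<theta> x b"
  define K2 where "K2 = kap x (d b)"
  define K4 where "K4 = kap d' x"
  define cx where "cx = cc (x \<otimes>\<^bsub>D\<^esub> d b)"
  have KK0: "k1 \<in> K" "k3 \<in> K" "K2 \<in> K" "K4 \<in> K"
    using x b s by (simp_all add: k1_def k3_def K2_def K4_def d'_def beK kap_K)
  have KK: "k1 \<in> K" "k3 \<in> K" "K2 \<in> K" "K4 \<in> K" "\<theta> (xs s) k1 \<in> K"
    using KK0 K_th[OF X_D[OF s] KK0(1)] by auto
  have BB: "k1 \<in> carrier B" "k3 \<in> carrier B" "K2 \<in> carrier B" "K4 \<in> carrier B" "\<theta> (xs s) k1 \<in> carrier B"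
    using KK by (simp_all add: K_iff)
  have cxB: "cx \<in> carrier B" using x b by (simp add: cx_def)
  have e1: "cx \<otimes>\<^bsub>B\<^esub> (\<theta> (xs s) k1 \<otimes>\<^bsub>B\<^esub> K2) = cc x \<otimes>\<^bsub>B\<^esub> \<theta> (xs s) b"
  proof -
    have "cx \<otimes>\<^bsub>B\<^esub> (\<theta> (xs s) k1 \<otimes>\<^bsub>B\<^esub> K2) = cx \<otimes>\<^bsub>B\<^esub> (K2 \<otimes>\<^bsub>B\<^esub> \<theta> (xs s) k1)" using K_central[OF KK(5) BB(3)] by simp
    also have "\<dots> = mm x (d b) \<otimes>\<^bsub>B\<^esub> \<theta> (xs s) k1"
      using x b BB by (simp add: K2_def kap_def cx_def B.m_assoc[symmetric])
    also have "\<dots> = cc x \<otimes>\<^bsub>B\<^esub> \<theta> (xs s) b"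
      using x b s by (simp add: mm_def k1_def s_def cl_N B.m_assoc)
    finally show ?thesis .
  qed
  have e2: "cx \<otimes>\<^bsub>B\<^esub> (k3 \<otimes>\<^bsub>B\<^esub> K4) = cc x \<otimes>\<^bsub>B\<^esub> \<theta> (xs s) b"
  proof -
    have "cx \<otimes>\<^bsub>B\<^esub> (k3 \<otimes>\<^bsub>B\<^esub> K4) = cx \<otimes>\<^bsub>B\<^esub> (K4 \<otimes>\<^bsub>B\<^esub> k3)" using K_central[OF KK(2) BB(4)] by simp
    also have "\<dots> = mm d' x \<otimes>\<^bsub>B\<^esub> k3"
      using x b d' BB dd by (simp add: K4_def kap_def cx_def B.m_assoc)
    also have "\<dots> = cc d' \<otimes>\<^bsub>B\<^esub> (cc x \<otimes>\<^bsub>B\<^esub> k3)"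
      using x b d' BB by (simp add: mm_def d'_def cl_N oc2 thone B.m_assoc)
    also have "\<dots> = cc d' \<otimes>\<^bsub>B\<^esub> (k3 \<otimes>\<^bsub>B\<^esub> cc x)" using K_central[OF KK(2), of "cc x"] x by simp
    also have "\<dots> = \<theta> x b \<otimes>\<^bsub>B\<^esub> cc x" using x b d' by (simp add: k3_def B.m_assoc)
    also have "\<dots> = cc x \<otimes>\<^bsub>B\<^esub> \<theta> (xs s) b" using x b th_cc[OF x b] by (simp add: s_def B.m_assoc)
    finally show ?thesis .
  qed
  have "\<theta> (xs s) k1 \<otimes>\<^bsub>B\<^esub> K2 = k3 \<otimes>\<^bsub>B\<^esub> K4"
    using B.Units_l_cancel[of cx "\<theta> (xs s) k1 \<otimes>\<^bsub>B\<^esub> K2" "k3 \<otimes>\<^bsub>B\<^esub> K4"] e1 e2 cxB BB B.Units_eq by simp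
  hence "\<zeta> (\<theta> (xs s) k1) \<otimes>\<^bsub>A\<^esub> \<zeta> K2 = \<zeta> k3 \<otimes>\<^bsub>A\<^esub> \<zeta> K4" using KK by (simp add: z_mult[symmetric])
  hence ze: "\<zeta> k1 \<otimes>\<^bsub>A\<^esub> \<zeta> K2 = \<zeta> k3 \<otimes>\<^bsub>A\<^esub> \<zeta> K4" using s KK by (simp add: zth)
  have ZA: "\<zeta> k1 \<in> carrier A" "\<zeta> K2 \<in> carrier A" "\<zeta> k3 \<in> carrier A" "\<zeta> K4 \<in> carrier A"
    using KK by (simp_all add: z_closed)
  have p1: "phi x (d b) = \<zeta> K2" using x b ZA(2) by (simp add: phi_def K2_def cl_N s_def)
  have p2: "phi d' x = \<zeta> K4" using x b ZA(4) by (simp add: phi_def K4_def d'_def cl_N)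
  have "\<zeta> k3 \<otimes>\<^bsub>A\<^esub> a \<otimes>\<^bsub>A\<^esub> phi d' x = a \<otimes>\<^bsub>A\<^esub> (\<zeta> k3 \<otimes>\<^bsub>A\<^esub> \<zeta> K4)" using a ZA by (simp add: p2 A.m_ac)
  also have "\<dots> = a \<otimes>\<^bsub>A\<^esub> \<zeta> k1 \<otimes>\<^bsub>A\<^esub> phi x (d b)" using a ZA by (simp add: p1 ze[symmetric] A.m_assoc)
  finally have "\<zeta> k3 \<otimes>\<^bsub>A\<^esub> a \<otimes>\<^bsub>A\<^esub> phi d' x = a \<otimes>\<^bsub>A\<^esub> \<zeta> k1 \<otimes>\<^bsub>A\<^esub> phi x (d b)" .
  thus ?thesis using dd by (simp add: bb_def EE_mult k1_def k3_def d'_def)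
qed

lemma dir2: "zeta_extension B D d \<theta> A \<zeta> EE jj snd bb"
  unfolding zeta_extension_def
proof (intro conjI ballI)
  show "group EE" by (rule EE_group)
  show "jj \<in> hom A EE" by (auto simp: hom_def jj_def EE_carrier EE_mult)
  show "inj_on jj (carrier A)" by (auto simp: inj_on_def jj_def)
  show "snd \<in> hom EE D" by (auto simp: hom_def EE_carrier EE_def)
  show "snd ` carrier EE = carrier D" by (force simp: EE_carrier)
  show "jj ` carrier A = kernel EE D snd" by (force simp: jj_def kernel_def EE_carrier)
  show "bb \<in> hom B EE" by (auto simp: hom_def bb_E bb_mult)
  fix a e assume a: "a \<in> carrier A" and e: "e \<in> carrier EE"
  then obtain c x where ex: "e = (c, x)" "c \<in> carrier A" "x \<in> carrier D" by (auto simp: EE_carrier)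
  show "jj a \<otimes>\<^bsub>EE\<^esub> e = e \<otimes>\<^bsub>EE\<^esub> jj a" using a ex by (simp add: jj_def EE_mult A.m_comm)
next
  fix b assume "b \<in> carrier B" thus "snd (bb b) = d b" by (simp add: bb_def)
next
  fix e b assume e: "e \<in> carrier EE" and b: "b \<in> carrier B"
  then obtain c x where ex: "e = (c, x)" "c \<in> carrier A" "x \<in> carrier D" by (auto simp: EE_carrier)
  have t: "bb (\<theta> x b) \<in> carrier EE" using ex b by (simp add: bb_E)
  have "bb (\<theta> (snd e) b) = bb (\<theta> x b) \<otimes>\<^bsub>EE\<^esub> e \<otimes>\<^bsub>EE\<^esub> inv\<^bsub>EE\<^esub> e"
    using t e by (simp add: ex(1) EE.m_assoc)
  also have "\<dots> = e \<otimes>\<^bsub>EE\<^esub> bb b \<otimes>\<^bsub>EE\<^esub> inv\<^bsub>EE\<^esub> e"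
    using bb_conj[OF ex(2) ex(3) b] by (simp add: ex(1))
  finally show "bb (\<theta> (snd e) b) = e \<otimes>\<^bsub>EE\<^esub> bb b \<otimes>\<^bsub>EE\<^esub> inv\<^bsub>EE\<^esub> e" .
next
  fix c assume "c \<in> K" thus "jj (\<zeta> c) = bb c" by (simp add: jj_def bb_def K_iff)
qed

end

lemma dir1_glob:
  assumes "crossed_module B D d \<theta>" "abstract_kernel B D d \<theta> A \<zeta>" "obs_choice B D d xs bx"
    and "zeta_extension B D d \<theta> A \<zeta> E j p \<beta>"
  shows "obs_vanishes B D d \<theta> A \<zeta> xs bx"
proof -
  interpret cmext B D d \<theta> A \<zeta> xs bx E j p \<beta>
    using assms by (simp add: cmext_def cmext_axioms_def cmset_def)
  show ?thesis by (rule dir1)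
qed

lemma dir2_glob:
  fixes B :: "'b monoid" and D :: "'d monoid" and A :: "'a monoid"
  assumes "crossed_module B D d \<theta>" "abstract_kernel B D d \<theta> A \<zeta>" "obs_choice B D d xs bx"
    and "obs_vanishes B D d \<theta> A \<zeta> xs bx"
  shows "\<exists>(E :: ('a \<times> 'd) monoid) j p \<beta>. zeta_extension B D d \<theta> A \<zeta> E j p \<beta>"
proof -
  interpret cmobs B D d \<theta> A \<zeta> xs bx
    using assms by (simp add: cmobs_def cmobs_axioms_def cmset_def)
  show ?thesis using dir2 by blast
qed

theorem mainTheorem4:
  fixes B :: "'b monoid" and D :: "'d monoid" and d :: "'b \<Rightarrow> 'd"
    and \<theta> :: "'d \<Rightarrow> 'b \<Rightarrow> 'b" and A :: "'a monoid" and \<zeta> :: "'b \<Rightarrow> 'a"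
    and xs :: "'d set \<Rightarrow> 'd" and bx :: "'d \<Rightarrow> 'b"
  assumes "crossed_module B D d \<theta>"
    and "abstract_kernel B D d \<theta> A \<zeta>"
    and "\<zeta> ` kernel B D d = carrier A"
    and "obs_choice B D d xs bx"
  shows "((\<exists>(E :: ('a \<times> 'd) monoid) j p \<beta>. zeta_extension B D d \<theta> A \<zeta> E j p \<beta>)
            \<longleftrightarrow> obs_vanishes B D d \<theta> A \<zeta> xs bx)
       \<and> (\<forall>(E :: 'e monoid) j p \<beta>. zeta_extension B D d \<theta> A \<zeta> E j p \<beta>
            \<longrightarrow> obs_vanishes B D d \<theta> A \<zeta> xs bx)"
proof (intro conjI iffI allI impI)
  assume "\<exists>(E :: ('a \<times> 'd) monoid) j p \<beta>. zeta_extension B D d \<theta> A \<zeta> E j p \<beta>"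
  then obtain E :: "('a \<times> 'd) monoid" and j p \<beta> where "zeta_extension B D d \<theta> A \<zeta> E j p \<beta>" by blast
  thus "obs_vanishes B D d \<theta> A \<zeta> xs bx" by (rule dir1_glob[OF assms(1,2,4)])
next
  assume "obs_vanishes B D d \<theta> A \<zeta> xs bx"
  thus "\<exists>(E :: ('a \<times> 'd) monoid) j p \<beta>. zeta_extension B D d \<theta> A \<zeta> E j p \<beta>"
    by (rule dir2_glob[OF assms(1,2,4)])
next
  fix E :: "'e monoid" and j p \<beta>
  assume "zeta_extension B D d \<theta> A \<zeta> E j p \<beta>"
  thus "obs_vanishes B D d \<theta> A \<zeta> xs bx" by (rule dir1_glob[OF assms(1,2,4)])
qed
end
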